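(* Let $k$ be a field. A 1-complex over $k$ is minimal if and only if it is (the edge set of) one of the following graphs: (1) an even cycle; (2) the union of two odd cycles meeting in exactly one vertex; (3a) if $\operatorname{char}k=2$: the disjoint union of two odd cycles; (3b) if $\operatorname{char}k\ne2$: two vertex-disjoint odd cycles together with a path of one or more edges joining a vertex of the first cycle to a vertex of the second, the internal vertices of the path lying on neither cycle.
   Context: A 1-complex on a set $A$ is a finite set of distinct multisets of cardinality 2 from $A$, i.e. a graph with loops $\{a,a\}$ allowed but no multiple edges. A cycle of length 1 is a loop; cycles of length $m\ge3$ are the usual $m$-gons (a 2-cycle is impossible); a cycle is even or odd according to its number of edges. A weighting assigns a nonzero $w_e\in k$ to each edge; it is balanced if $\sum_ew_e=0$ and for each vertex $i$, $\sum_{e\ni i}\operatorname{mult}_i(e)w_e=0$ (a loop at $i$ contributes $2w_e$). A complex is balanceable if some weighting balances it, and minimal if it is balanceable but no nonempty proper subset of its edges is balanceable. *)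

theory Defs
  imports Main "HOL-Library.Multiset"
begin

definition one_complex :: "'a multiset set \<Rightarrow> bool" where
  "one_complex C \<longleftrightarrow> finite C \<and> (\<forall>e\<in>C. size e = 2)"

definition balanced_weighting :: "'a multiset set \<Rightarrow> ('a multiset \<Rightarrow> 'k::field) \<Rightarrow> bool" where
  "balanced_weighting C w \<longleftrightarrow>
     (\<forall>e\<in>C. w e \<noteq> 0) \<and>
     (\<Sum>e\<in>C. w e) = 0 \<and>
     (\<forall>i. (\<Sum>e\<in>C. of_nat (count e i) * w e) = 0)"

definition balanceable :: "'k::field itself \<Rightarrow> 'a multiset set \<Rightarrow> bool" where
  "balanceable _ C \<longleftrightarrow> (\<exists>w :: 'a multiset \<Rightarrow> 'k. balanced_weighting C w)"

definition minimal_complex :: "'k::field itself \<Rightarrow> 'a multiset set \<Rightarrow> bool" where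
  "minimal_complex K C \<longleftrightarrow> C \<noteq> {} \<and> balanceable K C \<and>
     (\<forall>D. D \<subseteq> C \<and> D \<noteq> {} \<and> D \<noteq> C \<longrightarrow> \<not> balanceable K D)"

definition verts :: "'a multiset set \<Rightarrow> 'a set" where
  "verts C = (\<Union>e\<in>C. set_mset e)"

text \<open>Edges of the cycle through the distinct vertices vs (in cyclic order).
  Length 1 gives a loop.\<close>
definition cycle_edges :: "'a list \<Rightarrow> 'a multiset set" where
  "cycle_edges vs = {{#vs ! i, vs ! ((i + 1) mod length vs)#} | i. i < length vs}"

definition is_cycle :: "'a multiset set \<Rightarrow> nat \<Rightarrow> bool" where
  "is_cycle C m \<longleftrightarrow> (m = 1 \<or> m \<ge> 3) \<and>
     (\<exists>vs. distinct vs \<and> length vs = m \<and> C = cycle_edges vs)"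

definition is_odd_cycle :: "'a multiset set \<Rightarrow> bool" where
  "is_odd_cycle C \<longleftrightarrow> (\<exists>m. odd m \<and> is_cycle C m)"

definition is_even_cycle :: "'a multiset set \<Rightarrow> bool" where
  "is_even_cycle C \<longleftrightarrow> (\<exists>m. even m \<and> is_cycle C m)"

definition path_edges :: "'a list \<Rightarrow> 'a multiset set" where
  "path_edges ps = {{#ps ! i, ps ! (i + 1)#} | i. i + 1 < length ps}"

definition two_odd_cycles_one_vertex :: "'a multiset set \<Rightarrow> bool" where
  "two_odd_cycles_one_vertex C \<longleftrightarrow>
     (\<exists>C1 C2. is_odd_cycle C1 \<and> is_odd_cycle C2 \<and> C1 \<inter> C2 = {} \<and>
        card (verts C1 \<inter> verts C2) = 1 \<and> C = C1 \<union> C2)"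

definition two_disjoint_odd_cycles :: "'a multiset set \<Rightarrow> bool" where
  "two_disjoint_odd_cycles C \<longleftrightarrow>
     (\<exists>C1 C2. is_odd_cycle C1 \<and> is_odd_cycle C2 \<and>
        verts C1 \<inter> verts C2 = {} \<and> C = C1 \<union> C2)"

definition odd_cycles_with_path :: "'a multiset set \<Rightarrow> bool" where
  "odd_cycles_with_path C \<longleftrightarrow>
     (\<exists>C1 C2 ps. is_odd_cycle C1 \<and> is_odd_cycle C2 \<and>
        verts C1 \<inter> verts C2 = {} \<and>
        distinct ps \<and> length ps \<ge> 2 \<and>
        hd ps \<in> verts C1 \<and> last ps \<in> verts C2 \<and>
        (\<forall>i. 0 < i \<and> i + 1 < length ps \<longrightarrow> ps ! i \<notin> verts C1 \<union> verts C2) \<and>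
        C = C1 \<union> C2 \<union> path_edges ps)"

end

theory Submission
  imports Defs
begin

lemma pair_eq: "{#a,b#} = {#c,d#} \<longleftrightarrow> (a=c \<and> b=d) \<or> (a=d \<and> b=c)"
  by (auto simp: add_eq_conv_ex)

definition cedge :: "'a list \<Rightarrow> nat \<Rightarrow> 'a multiset" where
  "cedge vs i = {#vs!i, vs!((i+1) mod length vs)#}"

definition good_cyc :: "'a list \<Rightarrow> bool" where
  "good_cyc vs \<longleftrightarrow> distinct vs \<and> vs \<noteq> [] \<and> length vs \<noteq> 2"

lemma cycle_edges_eq: "cycle_edges vs = cedge vs ` {..<length vs}"
  unfolding cycle_edges_def cedge_def by auto

lemma mod_pair_False:
  fixes i j m :: nat
  assumes "i < m" "j < m" "m \<ge> 3" "j = (i+1) mod m" "i = (j+1) mod m"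
  shows False
proof -
  have jm: "j = (i+1) mod m" and im: "i = (j+1) mod m" using assms(4,5) by auto
  show False
  proof (cases "i+1 < m")
    case True
    then have j: "j = i+1" using jm by simp
    from im j have im2: "i = (i+2) mod m" by simp
    show False
    proof (cases "i+2 < m")
      case True then have "(i+2) mod m = i+2" by simp
      then show False using im2 by linarith
    next
      case False then have "i + 2 = m" using \<open>i+1<m\<close> by simp
      then have "(i+2) mod m = 0" by simp
      then show False using im2 \<open>i+2 = m\<close> assms(3) by linarith
    qed
  next
    case False
    then have "i + 1 = m" using assms(1) by simp
    then have "j = 0" using jm by simp
    then have "i = 1 mod m" using im by simp
    then have "i = 1" using assms(3) by simp
    then show False using \<open>i+1=m\<close> assms(3) by simp
  qed
qed

lemma good_cyc_len: "good_cyc vs \<Longrightarrow> length vs = 1 \<or> length vs \<ge> 3"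
  proof -
  assume g: "good_cyc vs"
  then have "length vs \<noteq> 0" "length vs \<noteq> 2" unfolding good_cyc_def by auto
  then show ?thesis by arith
qed


lemma cedge_inj: "good_cyc vs \<Longrightarrow> inj_on (cedge vs) {..<length vs}"
proof (rule inj_onI)
  fix i j assume g: "good_cyc vs" and i: "i \<in> {..<length vs}" and j: "j \<in> {..<length vs}"
    and e: "cedge vs i = cedge vs j"
  let ?m = "length vs"
  have d: "distinct vs" using g unfolding good_cyc_def by blast
  have m: "?m = 1 \<or> ?m \<ge> 3" using good_cyc_len[OF g] .
  have i': "i < ?m" and j': "j < ?m" using i j by auto
  have m0: "0 < ?m" using i' by linarith
  have lt: "(i+1) mod ?m < ?m" "(j+1) mod ?m < ?m" using m0 by simp_all
  from e have "(vs!i = vs!j \<and> vs!((i+1) mod ?m) = vs!((j+1) mod ?m)) \<or>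
     (vs!i = vs!((j+1) mod ?m) \<and> vs!((i+1) mod ?m) = vs!j)"
    unfolding cedge_def pair_eq by simp
  then show "i = j"
  proof
    assume "vs!i = vs!j \<and> vs!((i+1) mod ?m) = vs!((j+1) mod ?m)"
    then show ?thesis using d i' j' nth_eq_iff_index_eq by blast
  next
    assume h: "vs!i = vs!((j+1) mod ?m) \<and> vs!((i+1) mod ?m) = vs!j"
    then have "i = (j+1) mod ?m" "(i+1) mod ?m = j" using d i' j' lt nth_eq_iff_index_eq by blast+
    then show ?thesis
    proof (cases "?m = 1")
      case True then show ?thesis using i' j' by simp
    next
      case False then have "?m \<ge> 3" using m by simp
      show ?thesis using mod_pair_False[OF i' j' \<open>?m\<ge>3\<close> sym[OF \<open>(i+1) mod ?m = j\<close>] \<open>i = (j+1) mod ?m\<close>] by blast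
    qed
  qed
qed

lemma finite_cycle_edges: "finite (cycle_edges vs)"
  unfolding cycle_edges_eq by simp

lemma sum_cyc: "good_cyc vs \<Longrightarrow> sum f (cycle_edges vs) = (\<Sum>i<length vs. f (cedge vs i))"
  unfolding cycle_edges_eq by (simp add: sum.reindex cedge_inj)

lemma count_cedge: "count (cedge vs i) v =
   (if vs!i = v then 1 else 0) + (if vs!((i+1) mod length vs) = v then 1 else 0)"
  unfolding cedge_def by simp

lemma pred_mod_pos: "0 < t \<Longrightarrow> t < (m::nat) \<Longrightarrow> (t+m-1) mod m = t - 1"
proof -
  assume a: "0 < t" "t < m"
  obtain s where s: "t = Suc s" using a(1) by (cases t) auto
  have "t + m - 1 = s + m" using s by simp
  then have "(t+m-1) mod m = s mod m" by simp
  also have "\<dots> = s" using a(2) s by simp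
  finally show ?thesis using s by simp
qed

lemma pred_mod_0: "0 < (m::nat) \<Longrightarrow> (0+m-1) mod m = m - 1"
  by simp

lemma pred_mod_iff:
  fixes i t m :: nat
  assumes "i < m" "t < m"
  shows "(i+1) mod m = t \<longleftrightarrow> i = (t+m-1) mod m"
proof (cases "t = 0")
  case True
  have a: "(t+m-1) mod m = m - 1" using assms True by simp
  have "(i+1) mod m = 0 \<longleftrightarrow> i + 1 = m"
  proof (cases "i+1 < m")
    case True then show ?thesis by simp
  next
    case False then have "i+1 = m" using assms by simp
    then show ?thesis by simp
  qed
  moreover have "(i+1) mod m = t \<longleftrightarrow> (i+1) mod m = 0" using True by simp
  moreover have "i = (t+m-1) mod m \<longleftrightarrow> i = m - 1" using a by simp
  moreover have "i = m - 1 \<longleftrightarrow> i + 1 = m" using assms by linarith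
  ultimately show ?thesis by argo
next
  case False
  have a: "(t+m-1) mod m = t - 1" using pred_mod_pos False assms(2) by simp
  have "(i+1) mod m = t \<longleftrightarrow> i + 1 = t"
  proof (cases "i+1 < m")
    case True then show ?thesis by simp
  next
    case False then have "i+1 = m" using assms by simp
    then show ?thesis using \<open>t \<noteq> 0\<close> assms by auto
  qed
  then show ?thesis using a False by linarith
qed

lemma vsum_cyc:
  fixes g :: "nat \<Rightarrow> 'k::field"
  assumes g: "good_cyc vs" and t: "t < length vs"
  shows "(\<Sum>i<length vs. of_nat (count (cedge vs i) (vs!t)) * g i) = g t + g ((t + length vs - 1) mod length vs)"
proof -
  let ?m = "length vs"
  have d: "distinct vs" using g unfolding good_cyc_def by blast
  have "(\<Sum>i<?m. of_nat (count (cedge vs i) (vs!t)) * g i) =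
     (\<Sum>i<?m. (if i = t then g i else 0)) + (\<Sum>i<?m. (if i = (t + ?m - 1) mod ?m then g i else 0))"
  proof -
    have "of_nat (count (cedge vs i) (vs!t)) * g i =
       (if i = t then g i else 0) + (if i = (t + ?m - 1) mod ?m then g i else 0)" if i: "i < ?m" for i
    proof -
      have "(vs!i = vs!t) = (i = t)" using d i t nth_eq_iff_index_eq by blast
      moreover have "(vs!((i+1) mod ?m) = vs!t) = ((i+1) mod ?m = t)"
        using d i t nth_eq_iff_index_eq by (metis mod_less_divisor zero_less_iff_neq_zero gr_implies_not0)
      moreover have "((i+1) mod ?m = t) = (i = (t + ?m - 1) mod ?m)" using pred_mod_iff i t by blast
      ultimately show ?thesis unfolding count_cedge by (simp add: distrib_right)
    qed
    then show ?thesis by (simp add: sum.distrib)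
  qed
  also have "\<dots> = g t + g ((t + ?m - 1) mod ?m)"
  proof -
    have "0 < ?m" using t by linarith
    then have "(t + ?m - 1) mod ?m < ?m" by simp
    then show ?thesis using t by (simp add: sum.delta')
  qed
  finally show ?thesis .
qed

lemma vsum_notin:
  fixes f :: "'a multiset \<Rightarrow> 'k::field"
  assumes "v \<notin> verts R"
  shows "(\<Sum>e\<in>R. of_nat (count e v) * f e) = 0"
proof -
  have "count e v = 0" if "e \<in> R" for e using assms that unfolding verts_def by (auto simp: not_in_iff)
  then show ?thesis by simp
qed

lemma verts_cycle_edges: "vs \<noteq> [] \<Longrightarrow> verts (cycle_edges vs) = set vs"
proof -
  assume ne: "vs \<noteq> []"
  let ?m = "length vs"
  have "verts (cycle_edges vs) = (\<Union>i<?m. {vs!i, vs!((i+1) mod ?m)})"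
    unfolding verts_def cycle_edges_eq cedge_def by auto
  also have "\<dots> = set vs"
  proof
    show "(\<Union>i<?m. {vs!i, vs!((i+1) mod ?m)}) \<subseteq> set vs" using ne by auto
    show "set vs \<subseteq> (\<Union>i<?m. {vs!i, vs!((i+1) mod ?m)})"
      by (auto simp: in_set_conv_nth)
  qed
  finally show ?thesis .
qed


definition cidx :: "'a list \<Rightarrow> 'a multiset \<Rightarrow> nat" where
  "cidx vs e = (THE i. i < length vs \<and> cedge vs i = e)"

definition calt :: "'a list \<Rightarrow> 'k::field \<Rightarrow> 'a multiset \<Rightarrow> 'k" where
  "calt vs a e = a * (-1) ^ (cidx vs e)"

lemma cidx_cedge: "good_cyc vs \<Longrightarrow> i < length vs \<Longrightarrow> cidx vs (cedge vs i) = i"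
  unfolding cidx_def
  by (rule the_equality) (auto dest: inj_onD[OF cedge_inj])

lemma calt_cedge: "good_cyc vs \<Longrightarrow> i < length vs \<Longrightarrow> calt vs a (cedge vs i) = a * (-1)^i"
  unfolding calt_def by (simp add: cidx_cedge)

lemma alt_sum: "(\<Sum>i<m. (-1::'k::field)^i) = (if even m then 0 else 1)"
  by (induction m) auto

lemma alt_pair:
  assumes "t < (m::nat)"
  shows "(-1::'k::field)^t + (-1)^((t+m-1) mod m) = (if t = 0 \<and> odd m then 2 else 0)"
proof (cases "t = 0")
  case True
  have "(t+m-1) mod m = m - 1" using True assms by simp
  moreover have "(-1::'k)^(m-1) = (if odd m then 1 else -1)"
  proof -
    obtain s where "m = Suc s" using assms by (cases m) auto
    then show ?thesis by simp
  qed
  ultimately show ?thesis using True by simp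
next
  case False
  then have "(t+m-1) mod m = t - 1" using pred_mod_pos assms by simp
  moreover obtain s where "t = Suc s" using False by (cases t) auto
  ultimately show ?thesis using False by simp
qed

lemma calt_total:
  assumes "good_cyc vs"
  shows "(\<Sum>e\<in>cycle_edges vs. calt vs a e) = (if even (length vs) then 0 else a)"
proof -
  have "(\<Sum>e\<in>cycle_edges vs. calt vs a e) = (\<Sum>i<length vs. a * (-1)^i)"
    using assms by (simp add: sum_cyc calt_cedge)
  also have "\<dots> = a * (\<Sum>i<length vs. (-1)^i)" by (simp add: sum_distrib_left)
  also have "\<dots> = (if even (length vs) then 0 else a)" by (simp add: alt_sum)
  finally show ?thesis .
qed

lemma calt_vsum:
  fixes a :: "'k::field"
  assumes g: "good_cyc vs"
  shows "(\<Sum>e\<in>cycle_edges vs. of_nat (count e v) * calt vs a e) =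
     (if v = hd vs \<and> odd (length vs) then 2 * a else 0)"
proof (cases "v \<in> set vs")
  case False
  have ne: "vs \<noteq> []" using g unfolding good_cyc_def by blast
  have "v \<noteq> hd vs" using False ne by auto
  then show ?thesis using vsum_notin[of v "cycle_edges vs"] False verts_cycle_edges[OF ne] by simp
next
  case True
  then obtain t where t: "t < length vs" "v = vs!t" by (auto simp: in_set_conv_nth)
  have d: "distinct vs" using g unfolding good_cyc_def by blast
  have ne: "vs \<noteq> []" using g unfolding good_cyc_def by blast
  have hd: "(v = hd vs) = (t = 0)" using t d ne by (simp add: hd_conv_nth nth_eq_iff_index_eq)
  have "(\<Sum>e\<in>cycle_edges vs. of_nat (count e v) * calt vs a e) =
     (\<Sum>i<length vs. of_nat (count (cedge vs i) (vs!t)) * (a * (-1)^i))"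
    using g t by (simp add: sum_cyc calt_cedge)
  also have "\<dots> = a * (-1)^t + a * (-1)^((t + length vs - 1) mod length vs)"
    by (rule vsum_cyc[OF g t(1)])
  also have "\<dots> = a * ((-1)^t + (-1)^((t + length vs - 1) mod length vs))" by (simp add: distrib_left)
  also have "\<dots> = (if t = 0 \<and> odd (length vs) then 2 * a else 0)"
  proof -
    have ap: "((-1::'k)^t + (-1)^((t + length vs - 1) mod length vs)) = (if t = 0 \<and> odd (length vs) then 2 else 0)"
      by (rule alt_pair[OF t(1)])
    show ?thesis by (simp only: ap) simp
  qed
  finally show ?thesis using hd by simp
qed

lemma alt_forced:
  fixes f :: "'a multiset \<Rightarrow> 'k::field"
  assumes g: "good_cyc vs"
    and h: "\<And>t. 0 < t \<Longrightarrow> t < length vs \<Longrightarrow> (\<Sum>e\<in>cycle_edges vs. of_nat (count e (vs!t)) * f e) = 0"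
  shows "\<And>t. t < length vs \<Longrightarrow> f (cedge vs t) = (-1)^t * f (cedge vs 0)"
proof -
  fix t assume "t < length vs"
  then show "f (cedge vs t) = (-1)^t * f (cedge vs 0)"
  proof (induction t)
    case 0 then show ?case by simp
  next
    case (Suc t)
    have "(\<Sum>e\<in>cycle_edges vs. of_nat (count e (vs!Suc t)) * f e) = 0" using h Suc by simp
    moreover have "(\<Sum>e\<in>cycle_edges vs. of_nat (count e (vs!Suc t)) * f e) =
       f (cedge vs (Suc t)) + f (cedge vs ((Suc t + length vs - 1) mod length vs))"
      using g Suc.prems by (simp add: sum_cyc vsum_cyc)
    moreover have "(Suc t + length vs - 1) mod length vs = t" using pred_mod_pos[of "Suc t" "length vs"] Suc.prems by simp
    ultimately have "f (cedge vs (Suc t)) = - f (cedge vs t)" by (simp add: add_eq_0_iff)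
    then show ?case using Suc by simp
  qed
qed

lemma alt_forced_calt:
  fixes f :: "'a multiset \<Rightarrow> 'k::field"
  assumes g: "good_cyc vs"
    and h: "\<And>t. 0 < t \<Longrightarrow> t < length vs \<Longrightarrow> (\<Sum>e\<in>cycle_edges vs. of_nat (count e (vs!t)) * f e) = 0"
    and e: "e \<in> cycle_edges vs"
  shows "f e = calt vs (f (cedge vs 0)) e"
proof -
  obtain i where i: "i < length vs" "e = cedge vs i" using e unfolding cycle_edges_eq by auto
  have "calt vs (f (cedge vs 0)) (cedge vs i) = f (cedge vs 0) * (-1)^i" by (rule calt_cedge[OF g i(1)])
  then show ?thesis using alt_forced[OF g h i(1)] i by (simp add: mult.commute)
qed


lemma count_pair: "count {#a, b#} x = (if a = x then 1 else 0) + (if b = x then 1 else 0)"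
  by simp

definition pedge :: "'a list \<Rightarrow> nat \<Rightarrow> 'a multiset" where
  "pedge ps i = {#ps!i, ps!Suc i#}"

lemma path_edges_eq: "path_edges ps = pedge ps ` {..<length ps - 1}"
  unfolding path_edges_def pedge_def by force

lemma pedge_inj: "distinct ps \<Longrightarrow> inj_on (pedge ps) {..<length ps - 1}"
proof (rule inj_onI)
  fix i j assume d: "distinct ps" and i: "i \<in> {..<length ps - 1}" and j: "j \<in> {..<length ps - 1}"
    and e: "pedge ps i = pedge ps j"
  have i': "Suc i < length ps" "i < length ps" and j': "Suc j < length ps" "j < length ps" using i j by auto
  from e have "(ps!i = ps!j \<and> ps!Suc i = ps!Suc j) \<or> (ps!i = ps!Suc j \<and> ps!Suc i = ps!j)"
    unfolding pedge_def pair_eq by simp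
  then show "i = j"
  proof
    assume "ps!i = ps!j \<and> ps!Suc i = ps!Suc j" then show ?thesis using d i' j' nth_eq_iff_index_eq by blast
  next
    assume "ps!i = ps!Suc j \<and> ps!Suc i = ps!j"
    then have "i = Suc j" "Suc i = j" using d i' j' nth_eq_iff_index_eq by blast+
    then show ?thesis by simp
  qed
qed

lemma finite_path_edges: "finite (path_edges ps)"
  unfolding path_edges_eq by simp

lemma sum_path: "distinct ps \<Longrightarrow> sum f (path_edges ps) = (\<Sum>i<length ps - 1. f (pedge ps i))"
proof -
  assume d: "distinct ps"
  have "sum f (pedge ps ` {..<length ps - 1}) = sum (f \<circ> pedge ps) {..<length ps - 1}"
    by (rule sum.reindex[OF pedge_inj[OF d]])
  then show ?thesis unfolding path_edges_eq by simp
qed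

lemma vsum_path:
  fixes g :: "nat \<Rightarrow> 'k::field"
  assumes d: "distinct ps" and t: "t < length ps"
  shows "(\<Sum>i<length ps - 1. of_nat (count (pedge ps i) (ps!t)) * g i) =
     (if t < length ps - 1 then g t else 0) + (if 0 < t then g (t - 1) else 0)"
proof -
  let ?l = "length ps - 1"
  have "of_nat (count (pedge ps i) (ps!t)) * g i =
       (if i = t then g i else 0) + (if Suc i = t then g i else 0)" if i: "i < ?l" for i
  proof -
    have i2: "i < length ps" "Suc i < length ps" using i by linarith+
    have e1: "(ps!i = ps!t) = (i = t)" using d i2 t nth_eq_iff_index_eq by blast
    have e2: "(ps!Suc i = ps!t) = (Suc i = t)" using d i2 t nth_eq_iff_index_eq by blast
    have "count (pedge ps i) (ps!t) = (if i = t then 1 else 0) + (if Suc i = t then 1 else 0)"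
      unfolding pedge_def by (simp only: count_pair e1 e2)
    then show ?thesis by (simp add: distrib_right)
  qed
  then have "(\<Sum>i<?l. of_nat (count (pedge ps i) (ps!t)) * g i) =
     (\<Sum>i<?l. (if i = t then g i else 0)) + (\<Sum>i<?l. (if i = t - 1 \<and> 0 < t then g i else 0))"
    by (simp add: sum.distrib, intro sum.cong) auto
  also have "\<dots> = (if t < ?l then g t else 0) + (if 0 < t then g (t - 1) else 0)"
  proof -
    have "(\<Sum>i<?l. (if i = t - 1 \<and> 0 < t then g i else 0)) = (if 0 < t then g (t - 1) else 0)"
    proof (cases "0 < t")
      case True then have "t - 1 < ?l" using t by simp
      then show ?thesis using True by (simp add: sum.delta')
    qed simp
    then show ?thesis by (simp add: sum.delta')
  qed
  finally show ?thesis .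
qed

definition pidx :: "'a list \<Rightarrow> 'a multiset \<Rightarrow> nat" where
  "pidx ps e = (THE i. i < length ps - 1 \<and> pedge ps i = e)"

definition palt :: "'a list \<Rightarrow> 'k::field \<Rightarrow> 'a multiset \<Rightarrow> 'k" where
  "palt ps c e = c * (-1) ^ (pidx ps e)"

lemma pidx_pedge: "distinct ps \<Longrightarrow> i < length ps - 1 \<Longrightarrow> pidx ps (pedge ps i) = i"
  unfolding pidx_def
  by (rule the_equality) (auto dest: inj_onD[OF pedge_inj])

lemma palt_pedge: "distinct ps \<Longrightarrow> i < length ps - 1 \<Longrightarrow> palt ps c (pedge ps i) = c * (-1)^i"
  unfolding palt_def by (simp add: pidx_pedge)

lemma verts_path_edges: "2 \<le> length ps \<Longrightarrow> verts (path_edges ps) = set ps"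
proof -
  assume l: "2 \<le> length ps"
  have "verts (path_edges ps) = (\<Union>i<length ps - 1. {ps!i, ps!Suc i})"
    unfolding verts_def path_edges_eq pedge_def by auto
  also have "\<dots> = set ps"
  proof
    show "(\<Union>i<length ps - 1. {ps!i, ps!Suc i}) \<subseteq> set ps" by auto
    show "set ps \<subseteq> (\<Union>i<length ps - 1. {ps!i, ps!Suc i})"
    proof
      fix x assume "x \<in> set ps"
      then obtain t where t: "t < length ps" "x = ps!t" by (auto simp: in_set_conv_nth)
      show "x \<in> (\<Union>i<length ps - 1. {ps!i, ps!Suc i})"
      proof (cases "t < length ps - 1")
        case True then show ?thesis using t by blast
      next
        case False
        then have "t = Suc (t - 1)" "t - 1 < length ps - 1" using t l by auto
        then show ?thesis using t by (metis UN_iff insertCI lessThan_iff)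
      qed
    qed
  qed
  finally show ?thesis .
qed

lemma palt_vsum:
  fixes c :: "'k::field"
  assumes d: "distinct ps" and l: "2 \<le> length ps"
  shows "(\<Sum>e\<in>path_edges ps. of_nat (count e v) * palt ps c e) =
     (if v = hd ps then c else if v = last ps then c * (-1)^(length ps - 2) else 0)"
proof (cases "v \<in> set ps")
  case False
  have ne: "ps \<noteq> []" using l by auto
  have "v \<noteq> hd ps" "v \<noteq> last ps" using False ne by auto
  then show ?thesis using vsum_notin[of v "path_edges ps"] False verts_path_edges[OF l] by simp
next
  case True
  then obtain t where t: "t < length ps" "v = ps!t" by (auto simp: in_set_conv_nth)
  have ne: "ps \<noteq> []" using l by auto
  have hd: "(v = hd ps) = (t = 0)" using t d ne by (simp add: hd_conv_nth nth_eq_iff_index_eq)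
  have lst: "(v = last ps) = (t = length ps - 1)" using t d ne by (simp add: last_conv_nth nth_eq_iff_index_eq)
  have "(\<Sum>e\<in>path_edges ps. of_nat (count e v) * palt ps c e) =
     (\<Sum>i<length ps - 1. of_nat (count (pedge ps i) (ps!t)) * (c * (-1)^i))"
    using d t by (simp add: sum_path palt_pedge)
  also have "\<dots> = (if t < length ps - 1 then c * (-1)^t else 0) + (if 0 < t then c * (-1)^(t-1) else 0)"
    by (rule vsum_path[OF d t(1)])
  also have "\<dots> = (if t = 0 then c else if t = length ps - 1 then c * (-1)^(length ps - 2) else 0)"
  proof -
    consider "t = 0" | "0 < t" "t < length ps - 1" | "t = length ps - 1" "0 < t" using t l by linarith
    then show ?thesis
    proof cases
      case 2
      then obtain s where s: "t = Suc s" by (cases t) auto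
      show ?thesis using 2 s by simp
    next
      case 3
      then have "t - 1 = length ps - 2" by simp
      then show ?thesis using 3 by simp
    qed (use l in auto)
  qed
  finally show ?thesis using hd lst by simp
qed

lemma palt_total:
  fixes c :: "'k::field"
  assumes d: "distinct ps"
  shows "(\<Sum>e\<in>path_edges ps. palt ps c e) = c * (\<Sum>i<length ps - 1. (-1)^i)"
  using d by (simp add: sum_path palt_pedge sum_distrib_left)

lemma path_forced:
  fixes f :: "'a multiset \<Rightarrow> 'k::field"
  assumes d: "distinct ps"
    and h: "\<And>t. 0 < t \<Longrightarrow> t < length ps - 1 \<Longrightarrow> (\<Sum>e\<in>path_edges ps. of_nat (count e (ps!t)) * f e) = 0"
  shows "\<And>t. t < length ps - 1 \<Longrightarrow> f (pedge ps t) = (-1)^t * f (pedge ps 0)"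
proof -
  fix t assume "t < length ps - 1"
  then show "f (pedge ps t) = (-1)^t * f (pedge ps 0)"
  proof (induction t)
    case 0 then show ?case by simp
  next
    case (Suc t)
    have "(\<Sum>e\<in>path_edges ps. of_nat (count e (ps!Suc t)) * f e) = 0" using h Suc by simp
    moreover have "(\<Sum>e\<in>path_edges ps. of_nat (count e (ps!Suc t)) * f e) =
       f (pedge ps (Suc t)) + f (pedge ps t)"
    proof -
      have st: "Suc t < length ps" using Suc.prems by linarith
      have "(\<Sum>e\<in>path_edges ps. of_nat (count e (ps!Suc t)) * f e) =
         (\<Sum>i<length ps - 1. of_nat (count (pedge ps i) (ps!Suc t)) * f (pedge ps i))"
        by (rule sum_path[OF d])
      also have "\<dots> = (if Suc t < length ps - 1 then f (pedge ps (Suc t)) else 0) + (if 0 < Suc t then f (pedge ps (Suc t - 1)) else 0)"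
        by (rule vsum_path[OF d st])
      finally show ?thesis using Suc.prems by simp
    qed
    ultimately have "f (pedge ps (Suc t)) = - f (pedge ps t)" by (simp add: add_eq_0_iff)
    then show ?case using Suc by simp
  qed
qed

lemma path_forced_palt:
  fixes f :: "'a multiset \<Rightarrow> 'k::field"
  assumes d: "distinct ps"
    and h: "\<And>t. 0 < t \<Longrightarrow> t < length ps - 1 \<Longrightarrow> (\<Sum>e\<in>path_edges ps. of_nat (count e (ps!t)) * f e) = 0"
    and e: "e \<in> path_edges ps"
  shows "f e = palt ps (f (pedge ps 0)) e"
proof -
  obtain i where i: "i < length ps - 1" "e = pedge ps i" using e unfolding path_edges_eq by auto
  have "palt ps (f (pedge ps 0)) (pedge ps i) = f (pedge ps 0) * (-1)^i" by (rule palt_pedge[OF d i(1)])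
  then show ?thesis using path_forced[OF d h i(1)] i by (simp add: mult.commute)
qed


definition wsol :: "'a multiset set \<Rightarrow> ('a multiset \<Rightarrow> 'k::field) \<Rightarrow> bool" where
  "wsol C u \<longleftrightarrow> (\<Sum>e\<in>C. u e) = 0 \<and> (\<forall>i. (\<Sum>e\<in>C. of_nat (count e i) * u e) = 0)"

lemma min_from_unique:
  fixes w :: "'a multiset \<Rightarrow> 'k::field"
  assumes fin: "finite C" and ne: "C \<noteq> {}" and bw: "balanced_weighting C w"
    and uniq: "\<And>u :: 'a multiset \<Rightarrow> 'k. wsol C u \<Longrightarrow> \<exists>c. \<forall>e\<in>C. u e = c * w e"
  shows "minimal_complex TYPE('k) C"
  unfolding minimal_complex_def
proof (intro conjI allI impI)
  show "C \<noteq> {}" by (rule ne)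
  show "balanceable TYPE('k) C" unfolding balanceable_def using bw by blast
  fix D assume D: "D \<subseteq> C \<and> D \<noteq> {} \<and> D \<noteq> C"
  show "\<not> balanceable TYPE('k) D"
  proof
    assume "balanceable TYPE('k) D"
    then obtain u :: "'a multiset \<Rightarrow> 'k" where bu: "balanced_weighting D u" unfolding balanceable_def by blast
    define u' where "u' e = (if e \<in> D then u e else 0)" for e
    have sw: "(\<Sum>e\<in>C. g e * u' e) = (\<Sum>e\<in>D. g e * u e)" for g :: "'a multiset \<Rightarrow> 'k"
    proof -
      have "(\<Sum>e\<in>C. g e * u' e) = (\<Sum>e\<in>D. g e * u' e)"
        by (rule sum.mono_neutral_right) (use fin D in \<open>auto simp: u'_def\<close>)
      also have "\<dots> = (\<Sum>e\<in>D. g e * u e)" by (rule sum.cong) (auto simp: u'_def)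
      finally show ?thesis .
    qed
    have "wsol C u'" unfolding wsol_def
    proof (intro conjI allI)
      show "(\<Sum>e\<in>C. u' e) = 0" using sw[of "\<lambda>_. 1"] bu unfolding balanced_weighting_def by simp
      fix i show "(\<Sum>e\<in>C. of_nat (count e i) * u' e) = 0"
        using sw[of "\<lambda>e. of_nat (count e i)"] bu unfolding balanced_weighting_def by simp
    qed
    then obtain c where c: "\<forall>e\<in>C. u' e = c * w e" using uniq by blast
    obtain e1 where e1: "e1 \<in> D" using D by blast
    obtain e2 where e2: "e2 \<in> C" "e2 \<notin> D" using D by blast
    have "u e1 \<noteq> 0" using bu e1 unfolding balanced_weighting_def by blast
    moreover have "u' e1 = c * w e1" using c e1 D by blast
    moreover have "u' e1 = u e1" by (simp add: u'_def e1)
    ultimately have "c \<noteq> 0" by auto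
    moreover have "w e2 \<noteq> 0" using bw e2 unfolding balanced_weighting_def by blast
    moreover have "0 = c * w e2" using c e2 by (auto simp: u'_def)
    ultimately show False by simp
  qed
qed

lemma calt_nz: "a \<noteq> 0 \<Longrightarrow> calt vs a e \<noteq> 0"
  unfolding calt_def by simp

lemma palt_nz: "a \<noteq> 0 \<Longrightarrow> palt vs a e \<noteq> 0"
  unfolding palt_def by simp

lemma calt_scale: "calt vs (a * b) e = a * calt vs b e"
  unfolding calt_def by simp

lemma palt_scale: "palt vs (a * b) e = a * palt vs b e"
  unfolding palt_def by simp

lemma cyc_edge_sub: "e \<in> cycle_edges vs \<Longrightarrow> set_mset e \<subseteq> set vs"
proof -
  assume "e \<in> cycle_edges vs"
  then obtain i where i: "i < length vs" "e = {#vs!i, vs!((i+1) mod length vs)#}" unfolding cycle_edges_def by auto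
  then have "0 < length vs" by linarith
  then have "(i+1) mod length vs < length vs" by simp
  then show ?thesis using i by auto
qed

lemma path_edge_sub: "e \<in> path_edges ps \<Longrightarrow> set_mset e \<subseteq> set ps"
  unfolding path_edges_def by auto

lemma wsolD:
  "wsol C u \<Longrightarrow> (\<Sum>e\<in>C. u e) = 0"
  "wsol C u \<Longrightarrow> (\<Sum>e\<in>C. of_nat (count e i) * u e) = 0"
  unfolding wsol_def by auto

lemma even_cycle_min:
  assumes g: "good_cyc vs" and ev: "even (length vs)"
  shows "minimal_complex TYPE('k::field) (cycle_edges vs)"
proof (rule min_from_unique[where w = "calt vs (1::'k)"])
  show "finite (cycle_edges vs)" by (rule finite_cycle_edges)
  show "cycle_edges vs \<noteq> {}" using g unfolding good_cyc_def cycle_edges_eq by auto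
  show "balanced_weighting (cycle_edges vs) (calt vs (1::'k))"
  proof -
    have "sum (calt vs (1::'k)) (cycle_edges vs) = 0" using calt_total[OF g, of "1::'k"] ev by simp
    moreover have "(\<Sum>e\<in>cycle_edges vs. of_nat (count e i) * calt vs (1::'k) e) = 0" for i
      using calt_vsum[OF g, of i "1::'k"] ev by simp
    ultimately show ?thesis unfolding balanced_weighting_def by (simp add: calt_nz)
  qed
  fix u :: "'a multiset \<Rightarrow> 'k" assume u: "wsol (cycle_edges vs) u"
  have "u e = calt vs (u (cedge vs 0)) e" if "e \<in> cycle_edges vs" for e
    by (rule alt_forced_calt[OF g _ that]) (rule wsolD(2)[OF u])
  then show "\<exists>c. \<forall>e\<in>cycle_edges vs. u e = c * calt vs 1 e"
    by (metis calt_scale mult.right_neutral)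
qed


lemma good_cyc_ne: "good_cyc vs \<Longrightarrow> vs \<noteq> []"
  unfolding good_cyc_def by blast

lemma good_cyc_distinct: "good_cyc vs \<Longrightarrow> distinct vs"
  unfolding good_cyc_def by blast

lemma cycle_edges_ne: "good_cyc vs \<Longrightarrow> cycle_edges vs \<noteq> {}"
  unfolding good_cyc_def cycle_edges_eq by auto

lemma nth_ne_hd: "distinct vs \<Longrightarrow> 0 < t \<Longrightarrow> t < length vs \<Longrightarrow> vs!t \<noteq> hd vs"
  by (cases vs) (auto simp: nth_eq_iff_index_eq)

lemma forced_in_union:
  fixes f :: "'a multiset \<Rightarrow> 'k::field"
  assumes g: "good_cyc vs" and fin: "finite R" and dis: "cycle_edges vs \<inter> R = {}"
    and sol: "\<And>x. (\<Sum>e\<in>cycle_edges vs \<union> R. of_nat (count e x) * f e) = 0"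
    and out: "\<And>t. 0 < t \<Longrightarrow> t < length vs \<Longrightarrow> vs!t \<notin> verts R"
    and e: "e \<in> cycle_edges vs"
  shows "f e = calt vs (f (cedge vs 0)) e"
proof (rule alt_forced_calt[OF g _ e])
  fix t assume t: "0 < t" "t < length vs"
  have "(\<Sum>e\<in>cycle_edges vs \<union> R. of_nat (count e (vs!t)) * f e) =
     (\<Sum>e\<in>cycle_edges vs. of_nat (count e (vs!t)) * f e) + (\<Sum>e\<in>R. of_nat (count e (vs!t)) * f e)"
    by (rule sum.union_disjoint[OF finite_cycle_edges fin dis])
  moreover have "(\<Sum>e\<in>R. of_nat (count e (vs!t)) * f e) = 0" by (rule vsum_notin[OF out[OF t]])
  ultimately show "(\<Sum>e\<in>cycle_edges vs. of_nat (count e (vs!t)) * f e) = 0" using sol by simp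
qed

lemma pair_min:
  assumes gu: "good_cyc u" and gv: "good_cyc v" and ou: "odd (length u)" and ov: "odd (length v)"
    and dis: "cycle_edges u \<inter> cycle_edges v = {}"
    and inter: "\<forall>x \<in> set u \<inter> set v. x = hd u \<and> x = hd v"
    and two: "hd u = hd v \<or> (2::'k::field) = 0"
  shows "minimal_complex TYPE('k) (cycle_edges u \<union> cycle_edges v)"
proof -
  let ?U = "cycle_edges u" and ?V = "cycle_edges v"
  define w where "w e = (if e \<in> ?U then calt u (1::'k) e else calt v (-1) e)" for e
  have split: "sum g (?U \<union> ?V) = sum g ?U + sum g ?V" for g :: "'a multiset \<Rightarrow> 'k"
    by (rule sum.union_disjoint[OF finite_cycle_edges finite_cycle_edges dis])
  have wU: "sum (\<lambda>e. h e * w e) ?U = sum (\<lambda>e. h e * calt u 1 e) ?U" for h :: "'a multiset \<Rightarrow> 'k"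
    by (rule sum.cong) (auto simp: w_def)
  have wV: "sum (\<lambda>e. h e * w e) ?V = sum (\<lambda>e. h e * calt v (-1) e) ?V" for h :: "'a multiset \<Rightarrow> 'k"
    by (rule sum.cong) (use dis in \<open>auto simp: w_def\<close>)
  have vu: "verts ?U = set u" by (rule verts_cycle_edges[OF good_cyc_ne[OF gu]])
  have vv: "verts ?V = set v" by (rule verts_cycle_edges[OF good_cyc_ne[OF gv]])
  show ?thesis
  proof (rule min_from_unique[where w = w])
    show "finite (?U \<union> ?V)" by (simp add: finite_cycle_edges)
    show "?U \<union> ?V \<noteq> {}" using cycle_edges_ne[OF gu] by simp
    show "balanced_weighting (?U \<union> ?V) w" unfolding balanced_weighting_def
    proof (intro conjI ballI allI)
      fix e show "w e \<noteq> 0" unfolding w_def by (simp add: calt_nz)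
    next
      have "sum w (?U \<union> ?V) = sum (\<lambda>e. 1 * w e) ?U + sum (\<lambda>e. 1 * w e) ?V" by (simp add: split)
      also have "\<dots> = sum (calt u 1) ?U + sum (calt v (-1)) ?V" by (simp only: wU wV) simp
      also have "\<dots> = 0" using calt_total[OF gu, of "1::'k"] calt_total[OF gv, of "-1::'k"] ou ov by simp
      finally show "sum w (?U \<union> ?V) = 0" .
    next
      fix x
      have "(\<Sum>e\<in>?U \<union> ?V. of_nat (count e x) * w e) =
        (\<Sum>e\<in>?U. of_nat (count e x) * calt u 1 e) + (\<Sum>e\<in>?V. of_nat (count e x) * calt v (-1) e)"
        by (simp only: split wU wV)
      also have "\<dots> = (if x = hd u then 2 else 0) + (if x = hd v then -2 else 0)"
        using calt_vsum[OF gu, of x "1::'k"] calt_vsum[OF gv, of x "-1::'k"] ou ov by simp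
      also have "\<dots> = 0" using two by auto
      finally show "(\<Sum>e\<in>?U \<union> ?V. of_nat (count e x) * w e) = 0" .
    qed
  next
    fix f :: "'a multiset \<Rightarrow> 'k" assume f: "wsol (?U \<union> ?V) f"
    let ?a = "f (cedge u 0)" and ?b = "f (cedge v 0)"
    have fU: "f e = calt u ?a e" if "e \<in> ?U" for e
    proof (rule forced_in_union[OF gu finite_cycle_edges dis wsolD(2)[OF f] _ that])
      fix t assume t: "0 < t" "t < length u"
      show "u!t \<notin> verts ?V"
      proof
        assume "u!t \<in> verts ?V"
        then have "u!t = hd u" using inter vv t by auto
        then show False using nth_ne_hd[OF good_cyc_distinct[OF gu] t] by simp
      qed
    qed
    have dis': "?V \<inter> ?U = {}" using dis by blast
    have fV: "f e = calt v ?b e" if "e \<in> ?V" for e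
    proof (rule forced_in_union[OF gv finite_cycle_edges dis' _ _ that])
      fix x show "(\<Sum>e\<in>?V \<union> ?U. of_nat (count e x) * f e) = 0"
        using wsolD(2)[OF f, of x] by (simp add: Un_commute)
    next
      fix t assume t: "0 < t" "t < length v"
      show "v!t \<notin> verts ?U"
      proof
        assume "v!t \<in> verts ?U"
        then have "v!t = hd v" using inter vu t by auto
        then show False using nth_ne_hd[OF good_cyc_distinct[OF gv] t] by simp
      qed
    qed
    have "0 = sum f (?U \<union> ?V)" using wsolD(1)[OF f] by simp
    also have "\<dots> = sum (calt u ?a) ?U + sum (calt v ?b) ?V"
      by (simp add: split fU fV cong: sum.cong)
    also have "\<dots> = ?a + ?b" using calt_total[OF gu, of ?a] calt_total[OF gv, of ?b] ou ov by simp
    finally have ab: "?b = - ?a" by (simp add: eq_neg_iff_add_eq_0 add.commute)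
    show "\<exists>c. \<forall>e\<in>?U \<union> ?V. f e = c * w e"
    proof (intro exI ballI)
      fix e assume e: "e \<in> ?U \<union> ?V"
      show "f e = ?a * w e"
      proof (cases "e \<in> ?U")
        case True then show ?thesis using fU calt_scale[of u ?a 1 e] by (simp add: w_def)
      next
        case False then have "e \<in> ?V" using e by blast
        then show ?thesis using fV False calt_scale[of v ?a "-1" e] ab by (simp add: w_def)
      qed
    qed
  qed
qed


lemma dumbbell_min:
  assumes gu: "good_cyc u" and gv: "good_cyc v" and ou: "odd (length u)" and ov: "odd (length v)"
    and d: "distinct ps" and l: "2 \<le> length ps" and hu: "hd ps = hd u" and hv: "last ps = hd v"
    and uv: "set u \<inter> set v = {}" and pu: "set ps \<inter> set u = {hd u}" and pv: "set ps \<inter> set v = {hd v}"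
    and two: "(2::'k::field) \<noteq> 0"
  shows "minimal_complex TYPE('k) (cycle_edges u \<union> cycle_edges v \<union> path_edges ps)"
proof -
  let ?U = "cycle_edges u" and ?V = "cycle_edges v" and ?P = "path_edges ps"
  have vu: "verts ?U = set u" by (rule verts_cycle_edges[OF good_cyc_ne[OF gu]])
  have vv: "verts ?V = set v" by (rule verts_cycle_edges[OF good_cyc_ne[OF gv]])
  have vp: "verts ?P = set ps" by (rule verts_path_edges[OF l])
  have ne: "ps \<noteq> []" using l by auto
  have hd0: "hd ps = ps!0" using ne by (simp add: hd_conv_nth)
  have last0: "last ps = ps!(length ps - 1)" using ne by (simp add: last_conv_nth)
  have hduv: "hd u \<noteq> hd v" using uv good_cyc_ne[OF gu] good_cyc_ne[OF gv] by (cases u; cases v) auto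
  have disUV: "?U \<inter> ?V = {}"
  proof (rule ccontr)
    assume "?U \<inter> ?V \<noteq> {}"
    then obtain e where e: "e \<in> ?U" "e \<in> ?V" by blast
    have "size e = 2" using e(1) unfolding cycle_edges_def by auto
    then obtain x where "x \<in># e" by (metis multiset_nonemptyE size_empty zero_neq_numeral)
    then show False using cyc_edge_sub[OF e(1)] cyc_edge_sub[OF e(2)] uv by blast
  qed
  have disP: "(?U \<union> ?V) \<inter> ?P = {}"
  proof (rule ccontr)
    assume "(?U \<union> ?V) \<inter> ?P \<noteq> {}"
    then obtain e where e: "e \<in> ?U \<union> ?V" "e \<in> ?P" by blast
    then obtain i where i: "i < length ps - 1" "e = pedge ps i" unfolding path_edges_eq by auto
    have i2: "i < length ps" "Suc i < length ps" using i by linarith+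
    have m: "ps!i \<in> set ps" "ps!Suc i \<in> set ps" using i2 by simp_all
    from e(1) show False
    proof
      assume "e \<in> ?U"
      then have "set_mset e \<subseteq> set u" by (rule cyc_edge_sub)
      moreover have "ps!Suc i \<in># e" using i by (simp add: pedge_def)
      ultimately have "ps!Suc i \<in> set u" by blast
      then have "ps!Suc i = ps!0" using pu m hu hd0 by auto
      moreover have "0 < length ps" using i2 by linarith
      ultimately show False using nth_eq_iff_index_eq[OF d i2(2), of 0] by simp
    next
      assume "e \<in> ?V"
      then have "set_mset e \<subseteq> set v" by (rule cyc_edge_sub)
      moreover have "ps!i \<in># e" using i by (simp add: pedge_def)
      ultimately have "ps!i \<in> set v" by blast
      then have "ps!i = ps!(length ps - 1)" using pv m hv last0 by auto
      moreover have "length ps - 1 < length ps" using i2 by linarith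
      ultimately show False using nth_eq_iff_index_eq[OF d i2(1), of "length ps - 1"] i by simp
    qed
  qed
  have fin: "finite ?U" "finite ?V" "finite ?P" by (simp_all add: finite_cycle_edges finite_path_edges)
  have split: "sum g (?U \<union> ?V \<union> ?P) = sum g ?U + sum g ?V + sum g ?P" for g :: "'a multiset \<Rightarrow> 'k"
    using sum.union_disjoint[of "?U \<union> ?V" ?P g] sum.union_disjoint[OF fin(1,2) disUV, of g] fin disP by simp
  define beta :: 'k where "beta = (-1)^(length ps - 2)"
  define w where "w e = (if e \<in> ?U then calt u (1::'k) e else if e \<in> ?V then calt v beta e else palt ps (-2) e)" for e
  have wU: "sum (\<lambda>e. h e * w e) ?U = sum (\<lambda>e. h e * calt u 1 e) ?U" for h :: "'a multiset \<Rightarrow> 'k"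
    by (rule sum.cong) (auto simp: w_def)
  have wV: "sum (\<lambda>e. h e * w e) ?V = sum (\<lambda>e. h e * calt v beta e) ?V" for h :: "'a multiset \<Rightarrow> 'k"
    by (rule sum.cong) (use disUV in \<open>auto simp: w_def\<close>)
  have wP: "sum (\<lambda>e. h e * w e) ?P = sum (\<lambda>e. h e * palt ps (-2) e) ?P" for h :: "'a multiset \<Rightarrow> 'k"
    by (rule sum.cong) (use disP in \<open>auto simp: w_def\<close>)
  have hdlast: "hd ps \<noteq> last ps" using hu hv hduv by simp
  show ?thesis
  proof (rule min_from_unique[where w = w])
    show "finite (?U \<union> ?V \<union> ?P)" using fin by simp
    show "?U \<union> ?V \<union> ?P \<noteq> {}" using cycle_edges_ne[OF gu] by simp
    show "balanced_weighting (?U \<union> ?V \<union> ?P) w" unfolding balanced_weighting_def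
    proof (intro conjI ballI allI)
      fix e show "w e \<noteq> 0" unfolding w_def beta_def using two by (simp add: calt_nz palt_nz)
    next
      have "sum w (?U \<union> ?V \<union> ?P) = sum (\<lambda>e. 1 * w e) ?U + sum (\<lambda>e. 1 * w e) ?V + sum (\<lambda>e. 1 * w e) ?P"
        by (simp add: split)
      also have "\<dots> = sum (calt u 1) ?U + sum (calt v beta) ?V + sum (palt ps (-2)) ?P" by (simp only: wU wV wP) simp
      also have "\<dots> = 1 + beta + (-2) * (\<Sum>i<length ps - 1. (-1)^i)"
        using calt_total[OF gu, of "1::'k"] calt_total[OF gv, of beta] palt_total[OF d, of "-2::'k"] ou ov by simp
      also have "\<dots> = 0"
      proof -
        obtain n where n: "length ps = Suc (Suc n)" using l by (metis add_2_eq_Suc le_Suc_ex)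
        show ?thesis unfolding beta_def alt_sum n by (cases "even n") simp_all
      qed
      finally show "sum w (?U \<union> ?V \<union> ?P) = 0" .
    next
      fix x
      have "(\<Sum>e\<in>?U \<union> ?V \<union> ?P. of_nat (count e x) * w e) =
        (\<Sum>e\<in>?U. of_nat (count e x) * calt u 1 e) + (\<Sum>e\<in>?V. of_nat (count e x) * calt v beta e)
         + (\<Sum>e\<in>?P. of_nat (count e x) * palt ps (-2) e)"
        by (simp only: split wU wV wP)
      also have "\<dots> = (if x = hd u then 2 else 0) + (if x = hd v then 2 * beta else 0) +
          (if x = hd ps then -2 else if x = last ps then -2 * (-1)^(length ps - 2) else 0)"
        using calt_vsum[OF gu, of x "1::'k"] calt_vsum[OF gv, of x beta] palt_vsum[OF d l, of x "-2::'k"] ou ov by simp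
      also have "\<dots> = 0" using hu hv hduv unfolding beta_def by auto
      finally show "(\<Sum>e\<in>?U \<union> ?V \<union> ?P. of_nat (count e x) * w e) = 0" .
    qed
  next
    fix f :: "'a multiset \<Rightarrow> 'k" assume f: "wsol (?U \<union> ?V \<union> ?P) f"
    let ?a = "f (cedge u 0)" and ?b = "f (cedge v 0)" and ?c = "f (pedge ps 0)"
    have fU: "f e = calt u ?a e" if "e \<in> ?U" for e
    proof (rule forced_in_union[where R = "?V \<union> ?P", OF gu _ _ _ _ that])
      show "finite (?V \<union> ?P)" using fin by simp
      show "?U \<inter> (?V \<union> ?P) = {}" using disUV disP by blast
      fix x show "(\<Sum>e\<in>?U \<union> (?V \<union> ?P). of_nat (count e x) * f e) = 0"
        using wsolD(2)[OF f, of x] by (simp add: Un_assoc)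
    next
      fix t assume t: "0 < t" "t < length u"
      have "u!t \<noteq> hd u" by (rule nth_ne_hd[OF good_cyc_distinct[OF gu] t])
      moreover have "u!t \<in> set u" using t by simp
      ultimately show "u!t \<notin> verts (?V \<union> ?P)" using vv vp uv pu unfolding verts_def by auto
    qed
    have fV: "f e = calt v ?b e" if "e \<in> ?V" for e
    proof (rule forced_in_union[where R = "?U \<union> ?P", OF gv _ _ _ _ that])
      show "finite (?U \<union> ?P)" using fin by simp
      show "?V \<inter> (?U \<union> ?P) = {}" using disUV disP by blast
      fix x show "(\<Sum>e\<in>?V \<union> (?U \<union> ?P). of_nat (count e x) * f e) = 0"
        using wsolD(2)[OF f, of x] by (simp add: Un_assoc Un_left_commute)
    next
      fix t assume t: "0 < t" "t < length v"
      have "v!t \<noteq> hd v" by (rule nth_ne_hd[OF good_cyc_distinct[OF gv] t])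
      moreover have "v!t \<in> set v" using t by simp
      ultimately show "v!t \<notin> verts (?U \<union> ?P)" using vu vp uv pv unfolding verts_def by auto
    qed
    have fP: "f e = palt ps ?c e" if "e \<in> ?P" for e
    proof (rule path_forced_palt[OF d _ that])
      fix t assume t: "0 < t" "t < length ps - 1"
      have t2: "t < length ps" using t by linarith
      have "ps!t \<noteq> ps!0" using nth_eq_iff_index_eq[OF d t2, of 0] t ne by simp
      moreover have "ps!t \<noteq> ps!(length ps - 1)" using nth_eq_iff_index_eq[OF d t2, of "length ps - 1"] t by simp
      moreover have "ps!t \<in> set ps" using t2 by simp
      ultimately have out: "ps!t \<notin> verts (?U \<union> ?V)" using vu vv pu pv hu hv hd0 last0 unfolding verts_def by auto
      have "(\<Sum>e\<in>?U \<union> ?V \<union> ?P. of_nat (count e (ps!t)) * f e) =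
        (\<Sum>e\<in>?U \<union> ?V. of_nat (count e (ps!t)) * f e) + (\<Sum>e\<in>?P. of_nat (count e (ps!t)) * f e)"
        by (rule sum.union_disjoint) (use fin disP in auto)
      then show "(\<Sum>e\<in>?P. of_nat (count e (ps!t)) * f e) = 0"
        using wsolD(2)[OF f, of "ps!t"] vsum_notin[OF out, of f] by simp
    qed
    have fsum: "(\<Sum>e\<in>?U \<union> ?V \<union> ?P. of_nat (count e x) * f e) =
        (\<Sum>e\<in>?U. of_nat (count e x) * calt u ?a e) + (\<Sum>e\<in>?V. of_nat (count e x) * calt v ?b e)
         + (\<Sum>e\<in>?P. of_nat (count e x) * palt ps ?c e)" for x
      by (simp add: split fU fV fP cong: sum.cong)
    have "0 = (if hd u = hd u then 2 * ?a else 0) + (if hd u = hd v then 2 * ?b else 0) +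
          (if hd u = hd ps then ?c else if hd u = last ps then ?c * (-1)^(length ps - 2) else 0)"
      using fsum[of "hd u"] wsolD(2)[OF f, of "hd u"]
        calt_vsum[OF gu, of "hd u" ?a] calt_vsum[OF gv, of "hd u" ?b] palt_vsum[OF d l, of "hd u" ?c] ou ov by simp
    then have c: "?c = -2 * ?a" using hu hduv by (simp add: eq_neg_iff_add_eq_0 add.commute)
    have "0 = (if hd v = hd u then 2 * ?a else 0) + (if hd v = hd v then 2 * ?b else 0) +
          (if hd v = hd ps then ?c else if hd v = last ps then ?c * (-1)^(length ps - 2) else 0)"
      using fsum[of "hd v"] wsolD(2)[OF f, of "hd v"]
        calt_vsum[OF gu, of "hd v" ?a] calt_vsum[OF gv, of "hd v" ?b] palt_vsum[OF d l, of "hd v" ?c] ou ov by simp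
    then have "2 * ?b = 2 * (?a * beta)" using hu hv hduv c unfolding beta_def
      by (simp add: eq_neg_iff_add_eq_0 add.commute)
    then have b: "?b = ?a * beta" using two by simp
    show "\<exists>c. \<forall>e\<in>?U \<union> ?V \<union> ?P. f e = c * w e"
    proof (intro exI ballI)
      fix e assume e: "e \<in> ?U \<union> ?V \<union> ?P"
      show "f e = ?a * w e"
      proof (cases "e \<in> ?U")
        case True then show ?thesis using fU calt_scale[of u ?a 1 e] by (simp add: w_def)
      next
        case nu: False
        show ?thesis
        proof (cases "e \<in> ?V")
          case True then show ?thesis using fV nu calt_scale[of v ?a beta e] b by (simp add: w_def)
        next
          case False then have "e \<in> ?P" using e nu by blast
          then show ?thesis using fP nu False palt_scale[of ps ?a "-2" e] c by (simp add: w_def mult.commute)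
        qed
      qed
    qed
  qed
qed


lemma two_eq_0_iff: "((2::'k::field) = 0) \<longleftrightarrow> CHAR('k) = 2"
proof -
  have "((2::'k) = 0) \<longleftrightarrow> of_nat 2 = (0::'k)" by simp
  also have "\<dots> \<longleftrightarrow> CHAR('k) dvd 2" by (rule of_nat_eq_0_iff_char_dvd)
  also have "\<dots> \<longleftrightarrow> CHAR('k) = 2"
  proof
    assume "CHAR('k) dvd 2"
    then have "CHAR('k) \<noteq> 0" by (metis dvd_0_left_iff zero_neq_numeral)
    moreover have "CHAR('k) \<le> 2" using \<open>CHAR('k) dvd 2\<close> by (simp add: dvd_imp_le)
    moreover have "CHAR('k) \<noteq> 1" using CHAR_not_1 by simp
    ultimately show "CHAR('k) = 2" by linarith
  qed simp
  finally show ?thesis .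
qed

lemma cedge_rotate:
  assumes i: "i < length vs"
  shows "cedge (rotate n vs) i = cedge vs ((n + i) mod length vs)"
proof -
  let ?m = "length vs"
  have m: "0 < ?m" using i by linarith
  have a: "rotate n vs ! i = vs ! ((n+i) mod ?m)" using i by (simp add: nth_rotate)
  have "(i+1) mod ?m < ?m" using m by simp
  then have b: "rotate n vs ! ((i+1) mod ?m) = vs ! ((n + (i+1) mod ?m) mod ?m)" by (simp add: nth_rotate)
  have "(n + (i+1) mod ?m) mod ?m = ((n + i) mod ?m + 1) mod ?m"
    by (metis add.assoc mod_add_left_eq mod_add_right_eq)
  then show ?thesis unfolding cedge_def using a b by simp
qed

lemma cycle_edges_rotate_sub: "cycle_edges (rotate n vs) \<subseteq> cycle_edges vs"
proof
  fix e assume "e \<in> cycle_edges (rotate n vs)"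
  then obtain i where i: "i < length vs" "e = cedge (rotate n vs) i" unfolding cycle_edges_eq by auto
  then have "e = cedge vs ((n + i) mod length vs)" using cedge_rotate by simp
  moreover have "0 < length vs" using i(1) by linarith
  then have "(n + i) mod length vs < length vs" by simp
  ultimately show "e \<in> cycle_edges vs" unfolding cycle_edges_eq by blast
qed

lemma cycle_edges_rotate: "cycle_edges (rotate n vs) = cycle_edges vs"
proof
  show "cycle_edges (rotate n vs) \<subseteq> cycle_edges vs" by (rule cycle_edges_rotate_sub)
  show "cycle_edges vs \<subseteq> cycle_edges (rotate n vs)"
  proof (cases "vs = []")
    case True then show ?thesis by simp
  next
    case False
    let ?m = "length vs"
    have "rotate (?m - n mod ?m) (rotate n vs) = rotate (?m - n mod ?m + n) vs" by (simp add: rotate_rotate)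
    also have "\<dots> = vs"
    proof (rule rotate_id)
      have "(?m - n mod ?m + n) mod ?m = (?m - n mod ?m + n mod ?m) mod ?m" by (simp add: mod_add_right_eq)
      also have "\<dots> = ?m mod ?m" using False by simp
      finally show "(?m - n mod ?m + n) mod length vs = 0" by simp
    qed
    finally have "vs = rotate (?m - n mod ?m) (rotate n vs)" by simp
    then show ?thesis using cycle_edges_rotate_sub[of "?m - n mod ?m" "rotate n vs"] by simp
  qed
qed

lemma good_cyc_rotate: "good_cyc (rotate n vs) = good_cyc vs"
  unfolding good_cyc_def by auto

lemma rotate_to_front:
  assumes "x \<in> set vs"
  shows "\<exists>n. hd (rotate n vs) = x"
proof -
  obtain t where t: "t < length vs" "vs!t = x" using assms by (auto simp: in_set_conv_nth)
  moreover have "vs \<noteq> []" using t(1) by auto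
  ultimately have "hd (rotate t vs) = x" using hd_rotate_conv_nth[of vs t] by auto
  then show ?thesis by blast
qed

lemma is_cycle_good: "is_cycle C m \<Longrightarrow> \<exists>vs. good_cyc vs \<and> length vs = m \<and> C = cycle_edges vs"
  unfolding is_cycle_def good_cyc_def by auto

lemma cyc_disjoint_edges:
  assumes "set u \<inter> set v = {}"
  shows "cycle_edges u \<inter> cycle_edges v = {}"
proof (rule ccontr)
  assume "cycle_edges u \<inter> cycle_edges v \<noteq> {}"
  then obtain e where e: "e \<in> cycle_edges u" "e \<in> cycle_edges v" by blast
  have "size e = 2" using e(1) unfolding cycle_edges_def by auto
  then obtain x where "x \<in># e" by (metis multiset_nonemptyE size_empty zero_neq_numeral)
  then show False using cyc_edge_sub[OF e(1)] cyc_edge_sub[OF e(2)] assms by blast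
qed

lemma odd_cyc_rot:
  assumes "is_odd_cycle C" "x \<in> verts C"
  shows "\<exists>u. good_cyc u \<and> odd (length u) \<and> C = cycle_edges u \<and> hd u = x \<and> verts C = set u"
proof -
  obtain m where m: "odd m" "is_cycle C m" using assms(1) unfolding is_odd_cycle_def by blast
  obtain vs where vs: "good_cyc vs" "length vs = m" "C = cycle_edges vs" using is_cycle_good[OF m(2)] by blast
  have vC: "verts C = set vs" using vs(3) verts_cycle_edges[OF good_cyc_ne[OF vs(1)]] by simp
  have "x \<in> set vs" using assms(2) vC by simp
  then obtain n where n: "hd (rotate n vs) = x" using rotate_to_front[of x vs] by blast
  show ?thesis
  proof (intro exI conjI)
    show "good_cyc (rotate n vs)" using vs(1) good_cyc_rotate by blast
    show "odd (length (rotate n vs))" using m vs by simp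
    show "C = cycle_edges (rotate n vs)" using vs(3) cycle_edges_rotate[of n vs] by simp
    show "hd (rotate n vs) = x" by (rule n)
    show "verts C = set (rotate n vs)" using vC by simp
  qed
qed

lemma rhs_min:
  assumes "is_even_cycle C \<or> two_odd_cycles_one_vertex C \<or>
           (CHAR('k) = 2 \<and> two_disjoint_odd_cycles C) \<or> (CHAR('k) \<noteq> 2 \<and> odd_cycles_with_path C)"
  shows "minimal_complex TYPE('k::field) C"
  using assms
proof (elim disjE conjE)
  assume "is_even_cycle C"
  then obtain vs where "good_cyc vs" "even (length vs)" "C = cycle_edges vs"
    unfolding is_even_cycle_def by (metis is_cycle_good)
  then show ?thesis using even_cycle_min by blast
next
  assume "two_odd_cycles_one_vertex C"
  then obtain C1 C2 where c: "is_odd_cycle C1" "is_odd_cycle C2" "C1 \<inter> C2 = {}"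
     "card (verts C1 \<inter> verts C2) = 1" "C = C1 \<union> C2"
    unfolding two_odd_cycles_one_vertex_def by blast
  then obtain x where x: "verts C1 \<inter> verts C2 = {x}" by (meson card_1_singletonE)
  obtain u where u: "good_cyc u" "odd (length u)" "C1 = cycle_edges u" "hd u = x" "verts C1 = set u"
    using odd_cyc_rot[OF c(1)] x by blast
  obtain v where v: "good_cyc v" "odd (length v)" "C2 = cycle_edges v" "hd v = x" "verts C2 = set v"
    using odd_cyc_rot[OF c(2)] x by blast
  show ?thesis unfolding c(5) u(3) v(3)
    by (rule pair_min) (use u v x c in auto)
next
  assume ch: "CHAR('k) = 2" and "two_disjoint_odd_cycles C"
  then obtain C1 C2 where c: "is_odd_cycle C1" "is_odd_cycle C2" "verts C1 \<inter> verts C2 = {}" "C = C1 \<union> C2"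
    unfolding two_disjoint_odd_cycles_def by blast
  obtain m vs where "odd m" "good_cyc vs" "length vs = m" "C1 = cycle_edges vs"
    using c(1) unfolding is_odd_cycle_def by (metis is_cycle_good)
  moreover obtain m' vs' where "odd m'" "good_cyc vs'" "length vs' = m'" "C2 = cycle_edges vs'"
    using c(2) unfolding is_odd_cycle_def by (metis is_cycle_good)
  ultimately show ?thesis unfolding c(4)
    using pair_min[of vs vs'] c(3) verts_cycle_edges good_cyc_ne cyc_disjoint_edges ch two_eq_0_iff
    by (metis empty_iff)
next
  assume ch: "CHAR('k) \<noteq> 2" and "odd_cycles_with_path C"
  then obtain C1 C2 ps where c: "is_odd_cycle C1" "is_odd_cycle C2" "verts C1 \<inter> verts C2 = {}"
     "distinct ps" "length ps \<ge> 2" "hd ps \<in> verts C1" "last ps \<in> verts C2"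
     "\<forall>i. 0 < i \<and> i + 1 < length ps \<longrightarrow> ps ! i \<notin> verts C1 \<union> verts C2"
     "C = C1 \<union> C2 \<union> path_edges ps"
    unfolding odd_cycles_with_path_def by blast
  obtain u where u: "good_cyc u" "odd (length u)" "C1 = cycle_edges u" "hd u = hd ps" "verts C1 = set u"
    using odd_cyc_rot[OF c(1) c(6)] by blast
  obtain v where v: "good_cyc v" "odd (length v)" "C2 = cycle_edges v" "hd v = last ps" "verts C2 = set v"
    using odd_cyc_rot[OF c(2) c(7)] by blast
  have ne: "ps \<noteq> []" using c(5) by auto
  have pu: "set ps \<inter> set u = {hd u}"
  proof
    show "{hd u} \<subseteq> set ps \<inter> set u" using u ne c(6) by auto
    show "set ps \<inter> set u \<subseteq> {hd u}"
    proof
      fix y assume y: "y \<in> set ps \<inter> set u"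
      then obtain i where i: "i < length ps" "y = ps!i" by (auto simp: in_set_conv_nth)
      consider "i = 0" | "0 < i \<and> i + 1 < length ps" | "i = length ps - 1" using i by linarith
      then show "y \<in> {hd u}"
      proof cases
        case 1 then show ?thesis using i u ne by (simp add: hd_conv_nth)
      next
        case 2 then show ?thesis using c(8) i y u by auto
      next
        case 3 then have "y = last ps" using i ne by (simp add: last_conv_nth)
        then show ?thesis using c(3,7) y u by auto
      qed
    qed
  qed
  have pv: "set ps \<inter> set v = {hd v}"
  proof
    show "{hd v} \<subseteq> set ps \<inter> set v" using v ne c(7) by auto
    show "set ps \<inter> set v \<subseteq> {hd v}"
    proof
      fix y assume y: "y \<in> set ps \<inter> set v"
      then obtain i where i: "i < length ps" "y = ps!i" by (auto simp: in_set_conv_nth)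
      consider "i = 0" | "0 < i \<and> i + 1 < length ps" | "i = length ps - 1" using i by linarith
      then show "y \<in> {hd v}"
      proof cases
        case 1 then have "y = hd ps" using i ne by (simp add: hd_conv_nth)
        then show ?thesis using c(3,6) y v by auto
      next
        case 2 then show ?thesis using c(8) i y v by auto
      next
        case 3 then have "y = last ps" using i ne by (simp add: last_conv_nth)
        then show ?thesis using v by auto
      qed
    qed
  qed
  have two: "(2::'k) \<noteq> 0" using ch two_eq_0_iff by blast
  show ?thesis unfolding c(9) u(3) v(3)
    by (rule dumbbell_min[OF u(1) v(1) u(2) v(2) c(4) c(5)]) (use u v c pu pv two in auto)
qed


section \<open>Paths in a complex\<close>

definition gpath :: "'a multiset set \<Rightarrow> 'a list \<Rightarrow> bool" where
  "gpath H ps \<longleftrightarrow> distinct ps \<and> successively (\<lambda>a b. {#a, b#} \<in> H) ps"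

lemma gpath_nth: "gpath H ps \<Longrightarrow> Suc i < length ps \<Longrightarrow> {#ps!i, ps!Suc i#} \<in> H"
  unfolding gpath_def using successively_nth by fastforce

lemma gpath_rev: "gpath H ps \<Longrightarrow> gpath H (rev ps)"
  unfolding gpath_def by (simp add: add_mset_commute)

lemma gpath_take: "gpath H ps \<Longrightarrow> gpath H (take n ps)"
  unfolding gpath_def using successively_append_iff[of _ "take n ps" "drop n ps"] by simp

lemma gpath_drop: "gpath H ps \<Longrightarrow> gpath H (drop n ps)"
  unfolding gpath_def using successively_append_iff[of _ "take n ps" "drop n ps"] by simp

lemma gpath_append:
  "gpath H xs \<Longrightarrow> gpath H ys \<Longrightarrow> set xs \<inter> set ys = {} \<Longrightarrow> xs \<noteq> [] \<Longrightarrow> ys \<noteq> [] \<Longrightarrow>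
   {#last xs, hd ys#} \<in> H \<Longrightarrow> gpath H (xs @ ys)"
  unfolding gpath_def by (simp add: successively_append_iff)

lemma gpath_Cons: "gpath H ps \<Longrightarrow> ps \<noteq> [] \<Longrightarrow> x \<notin> set ps \<Longrightarrow> {#x, hd ps#} \<in> H \<Longrightarrow> gpath H (x # ps)"
  unfolding gpath_def by (simp add: successively_Cons)

lemma gpath_path_edges: "gpath H ps \<Longrightarrow> path_edges ps \<subseteq> H"
  unfolding path_edges_def using gpath_nth by fastforce

lemma gpath_cycle:
  assumes p: "gpath H vs" and ne: "vs \<noteq> []" and l: "length vs \<noteq> 2" and c: "{#last vs, hd vs#} \<in> H"
  shows "good_cyc vs \<and> cycle_edges vs \<subseteq> H"
proof
  show "good_cyc vs" using p ne l unfolding good_cyc_def gpath_def by blast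
  show "cycle_edges vs \<subseteq> H"
  proof
    fix e assume "e \<in> cycle_edges vs"
    then obtain i where i: "i < length vs" "e = {#vs!i, vs!((i+1) mod length vs)#}" unfolding cycle_edges_def by auto
    show "e \<in> H"
    proof (cases "Suc i < length vs")
      case True then show ?thesis using i gpath_nth[OF p True] by simp
    next
      case False then have "i = length vs - 1" using i by simp
      then have "e = {#last vs, hd vs#}" using i ne by (simp add: last_conv_nth hd_conv_nth)
      then show ?thesis using c by simp
    qed
  qed
qed

lemma in_take_nth: "x \<in> set (take n xs) \<Longrightarrow> \<exists>a. a < n \<and> a < length xs \<and> x = xs!a"
  by (auto simp: in_set_conv_nth)

lemma in_drop_nth: "x \<in> set (drop n xs) \<Longrightarrow> \<exists>a. n \<le> a \<and> a < length xs \<and> x = xs!a"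
proof -
  assume "x \<in> set (drop n xs)"
  then obtain b where "b < length (drop n xs)" "x = drop n xs ! b" by (auto simp: in_set_conv_nth)
  then show ?thesis by (intro exI[of _ "n + b"]) auto
qed

lemma loop_in_cyc:
  assumes g: "good_cyc vs" and e: "{#x, x#} \<in> cycle_edges vs"
  shows "length vs = 1"
proof (rule ccontr)
  assume "length vs \<noteq> 1"
  then have m: "length vs \<ge> 3" using good_cyc_len[OF g] by simp
  obtain i where i: "i < length vs" "{#x, x#} = {#vs!i, vs!((i+1) mod length vs)#}"
    using e unfolding cycle_edges_def by auto
  then have "vs!i = vs!((i+1) mod length vs)" by (auto simp: pair_eq)
  moreover have "0 < length vs" using m by linarith
  then have "(i+1) mod length vs < length vs" by simp
  ultimately have ii: "i = (i+1) mod length vs" using good_cyc_distinct[OF g] i nth_eq_iff_index_eq by blast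
  show False
  proof (cases "i + 1 < length vs")
    case True then show False using ii by simp
  next
    case False then have "i + 1 = length vs" using i by simp
    then have "i = 0" using ii by simp
    then show False using \<open>i + 1 = length vs\<close> m by simp
  qed
qed


definition even_in :: "'a multiset set \<Rightarrow> bool" where
  "even_in H \<longleftrightarrow> (\<exists>vs. good_cyc vs \<and> even (length vs) \<and> cycle_edges vs \<subseteq> H)"

definition bowtie_in :: "'a multiset set \<Rightarrow> bool" where
  "bowtie_in H \<longleftrightarrow> (\<exists>u v. good_cyc u \<and> good_cyc v \<and> odd (length u) \<and> odd (length v) \<and>
     cycle_edges u \<inter> cycle_edges v = {} \<and> hd u = hd v \<and> set u \<inter> set v = {hd u} \<and>
     cycle_edges u \<subseteq> H \<and> cycle_edges v \<subseteq> H)"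

definition dumbbell_in :: "'a multiset set \<Rightarrow> bool" where
  "dumbbell_in H \<longleftrightarrow> (\<exists>u v ps. good_cyc u \<and> good_cyc v \<and> odd (length u) \<and> odd (length v) \<and>
     distinct ps \<and> 2 \<le> length ps \<and> hd ps = hd u \<and> last ps = hd v \<and> set u \<inter> set v = {} \<and>
     set ps \<inter> set u = {hd u} \<and> set ps \<inter> set v = {hd v} \<and>
     cycle_edges u \<subseteq> H \<and> cycle_edges v \<subseteq> H \<and> path_edges ps \<subseteq> H)"

lemma last_take_nth: "j < length xs \<Longrightarrow> last (take (Suc j) xs) = xs!j"
proof -
  assume a: "j < length xs"
  have l: "length (take (Suc j) xs) = Suc j" using a by simp
  then have "take (Suc j) xs \<noteq> []" by auto
  then have "last (take (Suc j) xs) = take (Suc j) xs ! (length (take (Suc j) xs) - 1)" by (rule last_conv_nth)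
  then show ?thesis using l by simp
qed

lemma hd_take_nth: "0 < n \<Longrightarrow> xs \<noteq> [] \<Longrightarrow> hd (take n xs) = xs!0"
  by (simp add: hd_conv_nth)

lemma size2_sub_single: "size e = 2 \<Longrightarrow> set_mset e \<subseteq> {x} \<Longrightarrow> e = {#x, x#}"
proof -
  assume s: "size e = 2" and sub: "set_mset e \<subseteq> {x}"
  obtain a A where "e = add_mset a A" using s by (metis size_eq_Suc_imp_eq_union numeral_2_eq_2)
  moreover then have "size A = 1" using s by simp
  then obtain b where "A = {#b#}" using size_1_singleton_mset by blast
  ultimately show ?thesis using sub by auto
qed

lemma case1:
  assumes p: "gpath H ps" and L: "2 \<le> length ps"
    and jE: "{#ps!0, ps!j#} \<in> H" and jv: "j = 0 \<or> (2 \<le> j \<and> j < length ps)"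
    and iE: "{#ps!i, ps!(length ps - 1)#} \<in> H" and iv: "i = length ps - 1 \<or> i + 3 \<le> length ps"
    and ng: "\<not> (i = 0 \<and> j = length ps - 1)"
    and sz: "\<forall>e\<in>H. size e = 2"
  shows "even_in H \<or> bowtie_in H \<or> dumbbell_in H"
proof -
  let ?L = "length ps"
  have d: "distinct ps" using p unfolding gpath_def by blast
  have ne: "ps \<noteq> []" using L by auto
  have jL: "j < ?L" and iL: "i < ?L" using jv iv L by auto
  have lastps: "last ps = ps!(?L - 1)" using ne by (simp add: last_conv_nth)
  define A where "A = take (Suc j) ps"
  define B where "B = drop i ps"
  have lA: "length A = Suc j" using jL unfolding A_def by simp
  have lB: "length B = ?L - i" unfolding B_def by simp
  have hdA: "hd A = ps!0" unfolding A_def using ne by (simp add: hd_conv_nth)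
  have lastA: "last A = ps!j" unfolding A_def by (rule last_take_nth[OF jL])
  have hdB: "hd B = ps!i" unfolding B_def by (rule hd_drop_conv_nth[OF iL])
  have lastB: "last B = ps!(?L - 1)" unfolding B_def using iL lastps by simp
  have pA: "gpath H A" unfolding A_def by (rule gpath_take[OF p])
  have pB: "gpath H B" unfolding B_def by (rule gpath_drop[OF p])
  have neA: "A \<noteq> []" using lA by auto
  have neB: "B \<noteq> []" using lB iL by auto
  have cA: "good_cyc A \<and> cycle_edges A \<subseteq> H"
    by (rule gpath_cycle[OF pA neA]) (use lA jv lastA hdA jE in \<open>auto simp: add_mset_commute\<close>)
  have cB: "good_cyc B \<and> cycle_edges B \<subseteq> H"
    by (rule gpath_cycle[OF pB neB]) (use lB iv lastB hdB iE in \<open>auto simp: add_mset_commute\<close>)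
  have prA: "gpath H (rev A)" by (rule gpath_rev[OF pA])
  have crA: "good_cyc (rev A) \<and> cycle_edges (rev A) \<subseteq> H"
    by (rule gpath_cycle[OF prA]) (use lA jv lastA hdA jE neA in \<open>auto simp: hd_rev last_rev\<close>)
  have hdrA: "hd (rev A) = ps!j" using lastA by (simp add: hd_rev)
  show ?thesis
  proof (cases "even (length A)")
    case True then show ?thesis using cA unfolding even_in_def by blast
  next
    case oA: False
    show ?thesis
    proof (cases "even (length B)")
      case True then show ?thesis using cB unfolding even_in_def by blast
    next
      case oB: False
      consider "i < j" | "i = j" | "j < i" by linarith
      then show ?thesis
      proof cases
        case 1
        define X where "X = take (Suc i) ps"
        define Y where "Y = rev (drop j ps)"
        have lX: "length X = Suc i" using iL unfolding X_def by simp
        have lY: "length Y = ?L - j" unfolding Y_def by simp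
        have pX: "gpath H X" unfolding X_def by (rule gpath_take[OF p])
        have pY: "gpath H Y" unfolding Y_def by (rule gpath_rev[OF gpath_drop[OF p]])
        have disXY: "set X \<inter> set Y = {}" unfolding X_def Y_def
          using set_take_disj_set_drop_if_distinct[OF d, of "Suc i" j] 1 by simp
        have neX: "X \<noteq> []" and neY: "Y \<noteq> []" using lX lY jL by auto
        have lastX: "last X = ps!i" unfolding X_def by (rule last_take_nth[OF iL])
        have hdY: "hd Y = ps!(?L - 1)" unfolding Y_def using jL lastps by (simp add: hd_rev)
        have lastY: "last Y = ps!j" unfolding Y_def using jL by (simp add: last_rev hd_drop_conv_nth)
        have hdX: "hd X = ps!0" unfolding X_def using ne by (simp add: hd_conv_nth)
        have pXY: "gpath H (X @ Y)" by (rule gpath_append[OF pX pY disXY neX neY]) (use lastX hdY iE in simp)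
        have l2: "length (X @ Y) \<noteq> 2" using lX lY ng jL by auto
        have cXY: "good_cyc (X @ Y) \<and> cycle_edges (X @ Y) \<subseteq> H"
          by (rule gpath_cycle[OF pXY _ l2]) (use neX lastY hdX neY jE in \<open>auto simp: add_mset_commute\<close>)
        have "even (length (X @ Y))" using lX lY lA lB oA oB 1 jL iL by simp
        then show ?thesis using cXY unfolding even_in_def by blast
      next
        case 2
        have int: "set (rev A) \<inter> set B = {ps!j}"
        proof
          show "{ps!j} \<subseteq> set (rev A) \<inter> set B" using hdrA hdB 2 neA neB
            by (metis Int_iff empty_subsetI hd_in_set insert_subset set_rev rev_is_Nil_conv)
          show "set (rev A) \<inter> set B \<subseteq> {ps!j}"
          proof
            fix x assume x: "x \<in> set (rev A) \<inter> set B"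
            then obtain a where a: "a < Suc j" "a < ?L" "x = ps!a" using in_take_nth[of x "Suc j" ps] unfolding A_def by auto
            obtain b where b: "i \<le> b" "b < ?L" "x = ps!b" using in_drop_nth[of x i ps] x unfolding B_def by auto
            have "a = b" using a b d nth_eq_iff_index_eq by metis
            then show "x \<in> {ps!j}" using a b 2 by (simp add: le_antisym less_Suc_eq_le)
          qed
        qed
        have disE: "cycle_edges (rev A) \<inter> cycle_edges B = {}"
        proof (rule ccontr)
          assume "cycle_edges (rev A) \<inter> cycle_edges B \<noteq> {}"
          then obtain e where e: "e \<in> cycle_edges (rev A)" "e \<in> cycle_edges B" by blast
          have "set_mset e \<subseteq> {ps!j}" using cyc_edge_sub[OF e(1)] cyc_edge_sub[OF e(2)] int by blast
          moreover have "size e = 2" using e(1) crA sz by blast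
          ultimately have "e = {#ps!j, ps!j#}" by (rule size2_sub_single[rotated])
          then have "length (rev A) = 1" "length B = 1" using loop_in_cyc crA cB e by metis+
          then show False using lA lB 2 L by simp
        qed
        have "bowtie_in H" unfolding bowtie_in_def
          by (rule exI[of _ "rev A"], rule exI[of _ B]) (use crA cB oA oB disE hdrA hdB 2 int in auto)
        then show ?thesis by blast
      next
        case 3
        define q where "q = drop j (take (Suc i) ps)"
        have lq: "length q = Suc i - j" using iL unfolding q_def by simp
        have dq: "distinct q" using d unfolding q_def by simp
        have pq: "gpath H q" unfolding q_def by (rule gpath_drop[OF gpath_take[OF p]])
        have hdq: "hd q = ps!j" unfolding q_def using 3 iL by (simp add: hd_drop_conv_nth)
        have lastq: "last q = ps!i" unfolding q_def using 3 iL by (simp add: last_take_nth)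
        have inq: "\<exists>a. j \<le> a \<and> a \<le> i \<and> x = ps!a" if "x \<in> set q" for x
        proof -
          have "x \<in> set (drop j (take (Suc i) ps))" using that unfolding q_def .
          then obtain a where a: "j \<le> a" "a < length (take (Suc i) ps)" "x = take (Suc i) ps ! a"
            using in_drop_nth[of x j "take (Suc i) ps"] by blast
          then have "a < Suc i" by simp
          then have "x = ps ! a" using a(3) by simp
          then show ?thesis using a(1) \<open>a < Suc i\<close> by (intro exI[of _ a]) auto
        qed
        have uv: "set (rev A) \<inter> set B = {}" unfolding A_def B_def
          using set_take_disj_set_drop_if_distinct[OF d, of "Suc j" i] 3 by simp
        have qu: "set q \<inter> set (rev A) = {hd (rev A)}"
        proof
          show "{hd (rev A)} \<subseteq> set q \<inter> set (rev A)"
            using hdrA hdq lq 3 neA by (metis Int_iff Nil_is_rev_conv empty_subsetI hd_in_set insert_subset list.size(3) zero_less_diff Suc_diff_le less_imp_le_nat nat.distinct(1))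
          show "set q \<inter> set (rev A) \<subseteq> {hd (rev A)}"
          proof
            fix x assume x: "x \<in> set q \<inter> set (rev A)"
            then obtain a where a: "j \<le> a" "a \<le> i" "x = ps!a" using inq by blast
            obtain b where b: "b < Suc j" "b < ?L" "x = ps!b" using in_take_nth[of x "Suc j" ps] x unfolding A_def by auto
            have "a < ?L" using a iL by simp
            then have "a = b" using a b d nth_eq_iff_index_eq by metis
            then have "b = j" using a b by simp
            then show "x \<in> {hd (rev A)}" using b hdrA by simp
          qed
        qed
        have qv: "set q \<inter> set B = {hd B}"
        proof
          show "{hd B} \<subseteq> set q \<inter> set B"
            using hdB lastq lq 3 neB by (metis Int_iff empty_subsetI last_in_set insert_subset list.size(3) zero_less_diff Suc_diff_le less_imp_le_nat nat.distinct(1) hd_in_set)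
          show "set q \<inter> set B \<subseteq> {hd B}"
          proof
            fix x assume x: "x \<in> set q \<inter> set B"
            then obtain a where a: "j \<le> a" "a \<le> i" "x = ps!a" using inq by blast
            obtain b where b: "i \<le> b" "b < ?L" "x = ps!b" using in_drop_nth[of x i ps] x unfolding B_def by auto
            have "a < ?L" using a iL by simp
            then have "a = b" using a b d nth_eq_iff_index_eq by metis
            then show "x \<in> {hd B}" using a b hdB by simp
          qed
        qed
        have "dumbbell_in H" unfolding dumbbell_in_def
          by (rule exI[of _ "rev A"], rule exI[of _ B], rule exI[of _ q])
             (use crA cB oA oB dq lq 3 hdq hdrA lastq hdB uv qu qv gpath_path_edges[OF pq] in auto)
        then show ?thesis by blast
      qed
    qed
  qed
qed


definition iso_in :: "'a multiset set \<Rightarrow> bool" where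
  "iso_in H \<longleftrightarrow> (\<exists>vs. good_cyc vs \<and> odd (length vs) \<and> cycle_edges vs \<subseteq> H \<and>
      (\<forall>e\<in>H. \<forall>x\<in>set vs. x \<in># e \<longrightarrow> e \<in> cycle_edges vs))"

definition lp :: "'a multiset set \<Rightarrow> 'a list \<Rightarrow> bool" where
  "lp H ps \<longleftrightarrow> gpath H ps \<and> 2 \<le> length ps \<and> set ps \<subseteq> verts H \<and>
     (\<forall>qs. gpath H qs \<and> set qs \<subseteq> verts H \<longrightarrow> length qs \<le> length ps)"

definition Dg :: "'a multiset set \<Rightarrow> bool" where
  "Dg H \<longleftrightarrow> (\<forall>e\<in>H. \<forall>a b. e = {#a, b#} \<and> a \<noteq> b \<longrightarrow> (\<exists>e'\<in>H. e' \<noteq> e \<and> a \<in># e'))"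

lemma lpD:
  assumes "lp H ps"
  shows "gpath H ps" "2 \<le> length ps" "set ps \<subseteq> verts H"
    "\<And>qs. gpath H qs \<Longrightarrow> set qs \<subseteq> verts H \<Longrightarrow> length qs \<le> length ps"
  using assms unfolding lp_def by auto

lemma DgD:
  assumes D: "Dg H" and e: "{#a, b#} \<in> H" and ab: "a \<noteq> b"
  shows "\<exists>e'\<in>H. e' \<noteq> {#a, b#} \<and> a \<in># e'"
proof -
  have "\<forall>e\<in>H. \<forall>a b. e = {#a, b#} \<and> a \<noteq> b \<longrightarrow> (\<exists>e'\<in>H. e' \<noteq> e \<and> a \<in># e')"
    using D by (simp only: Dg_def)
  then have "\<forall>a' b'. {#a, b#} = {#a', b'#} \<and> a' \<noteq> b' \<longrightarrow> (\<exists>e'\<in>H. e' \<noteq> {#a, b#} \<and> a' \<in># e')"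
    using e by (rule bspec)
  then have "{#a, b#} = {#a, b#} \<and> a \<noteq> b \<longrightarrow> (\<exists>e'\<in>H. e' \<noteq> {#a, b#} \<and> a \<in># e')"
    by (elim allE)
  then show ?thesis using ab by simp
qed

lemma finite_verts: "finite H \<Longrightarrow> finite (verts H)"
  unfolding verts_def by simp

lemma lp_exists:
  assumes fin: "finite H" and e: "{#a, b#} \<in> H" and ab: "a \<noteq> b"
  shows "\<exists>ps. lp H ps"
proof -
  define P where "P n = (\<exists>qs. gpath H qs \<and> set qs \<subseteq> verts H \<and> length qs = n)" for n
  have "set [a, b] \<subseteq> verts H" using e unfolding verts_def by (auto intro!: bexI[OF _ e])
  moreover have "gpath H [a, b]" using e ab by (simp add: gpath_def)
  ultimately have P2: "P 2" unfolding P_def by (intro exI[of _ "[a, b]"]) simp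
  have bnd: "\<forall>n. P n \<longrightarrow> n \<le> card (verts H)"
  proof (intro allI impI)
    fix n assume "P n"
    then obtain qs where q: "gpath H qs" "set qs \<subseteq> verts H" "length qs = n" unfolding P_def by blast
    have "length qs = card (set qs)" using q(1) unfolding gpath_def by (simp add: distinct_card)
    also have "\<dots> \<le> card (verts H)" by (rule card_mono[OF finite_verts[OF fin] q(2)])
    finally show "n \<le> card (verts H)" using q(3) by simp
  qed
  obtain n where n: "P n" "\<forall>y. P y \<longrightarrow> y \<le> n" using Nat.ex_has_greatest_nat[of P 2, OF P2 bnd] by blast
  obtain ps where ps: "gpath H ps" "set ps \<subseteq> verts H" "length ps = n" using n(1) unfolding P_def by blast
  have "2 \<le> n" using n(2) P2 by blast
  then show ?thesis unfolding lp_def using ps n(2) unfolding P_def by (intro exI[of _ ps]) auto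
qed

lemma lp_rev: "lp H ps \<Longrightarrow> lp H (rev ps)"
  unfolding lp_def using gpath_rev by auto

lemma edge_other: "size e = 2 \<Longrightarrow> x \<in># e \<Longrightarrow> \<exists>y. e = {#x, y#}"
proof -
  assume s: "size e = 2" and x: "x \<in># e"
  obtain A where A: "e = add_mset x A" using multi_member_split[OF x] by blast
  then have "size A = 1" using s by simp
  then obtain y where "A = {#y#}" using size_1_singleton_mset by blast
  then show ?thesis using A by blast
qed

lemma end_hd:
  assumes l: "lp H ps" and sz: "\<forall>e\<in>H. size e = 2" and e: "e \<in> H" and x: "ps!0 \<in># e"
    and ne: "e \<noteq> {#ps!0, ps!1#}"
  shows "\<exists>j. (j = 0 \<or> (2 \<le> j \<and> j < length ps)) \<and> e = {#ps!0, ps!j#}"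
proof -
  note p = lpD(1)[OF l] and L = lpD(2)[OF l] and sv = lpD(3)[OF l] and mx = lpD(4)[OF l]
  have s2: "size e = 2" using sz e by blast
  obtain y where y: "e = {#ps!0, y#}" using edge_other[OF s2 x] by blast
  show ?thesis
  proof (cases "y \<in> set ps")
    case True
    then obtain j where j: "j < length ps" "y = ps!j" by (auto simp: in_set_conv_nth)
    have "j \<noteq> 1"
    proof
      assume "j = 1" then have "e = {#ps!0, ps!1#}" using y j by simp
      then show False using ne by contradiction
    qed
    then have "j = 0 \<or> (2 \<le> j \<and> j < length ps)" using j by linarith
    then show ?thesis using j y by blast
  next
    case False
    have nep: "ps \<noteq> []" using L by auto
    have hd0: "hd ps = ps!0" using nep by (simp add: hd_conv_nth)
    have "{#y, hd ps#} \<in> H" using e y hd0 by (simp add: add_mset_commute)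
    then have "gpath H (y # ps)" by (rule gpath_Cons[OF p nep False])
    moreover have "y \<in> verts H" using e y unfolding verts_def by (auto intro!: bexI[OF _ e])
    then have "set (y # ps) \<subseteq> verts H" using sv by simp
    ultimately have "length (y # ps) \<le> length ps" by (rule mx)
    then show ?thesis by simp
  qed
qed

lemma end_last:
  assumes l: "lp H ps" and sz: "\<forall>e\<in>H. size e = 2" and e: "e \<in> H" and x: "ps!(length ps - 1) \<in># e"
    and ne: "e \<noteq> {#ps!(length ps - 2), ps!(length ps - 1)#}"
  shows "\<exists>i. (i = length ps - 1 \<or> i + 3 \<le> length ps) \<and> e = {#ps!i, ps!(length ps - 1)#}"
proof -
  let ?L = "length ps"
  note L = lpD(2)[OF l]
  have nep: "ps \<noteq> []" using L by auto
  have r0: "rev ps ! 0 = ps!(?L - 1)" using L nep rev_nth[of 0 ps] by simp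
  have r1: "rev ps ! 1 = ps!(?L - 2)" using L rev_nth[of 1 ps] by (simp add: numeral_2_eq_2)
  have "e \<noteq> {#rev ps ! 0, rev ps ! 1#}" using ne r0 r1 by (simp add: add_mset_commute)
  then obtain j where j: "j = 0 \<or> (2 \<le> j \<and> j < ?L)" "e = {#rev ps ! 0, rev ps ! j#}"
    using end_hd[OF lp_rev[OF l] sz e] x r0 by auto
  have jL: "j < ?L" using j L by auto
  have "rev ps ! j = ps ! (?L - 1 - j)" using jL rev_nth[of j ps] by simp
  then show ?thesis using j r0 L by (intro exI[of _ "?L - 1 - j"]) (auto simp: add_mset_commute)
qed

lemma end_exists_hd:
  assumes l: "lp H ps" and sz: "\<forall>e\<in>H. size e = 2" and D: "Dg H"
  shows "\<exists>j. (j = 0 \<or> (2 \<le> j \<and> j < length ps)) \<and> {#ps!0, ps!j#} \<in> H"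
proof -
  note p = lpD(1)[OF l] and L = lpD(2)[OF l]
  have e: "{#ps!0, ps!1#} \<in> H" using gpath_nth[OF p, of 0] L by simp
  have d: "distinct ps" using p unfolding gpath_def by blast
  have "ps \<noteq> []" using L by auto
  then have "ps!0 \<noteq> ps!1" using nth_eq_iff_index_eq[OF d, of 0 1] L by simp
  then obtain e' where "e' \<in> H" "e' \<noteq> {#ps!0, ps!1#}" "ps!0 \<in># e'" using DgD[OF D e] by blast
  then show ?thesis using end_hd[OF l sz] by blast
qed

lemma end_exists_last:
  assumes l: "lp H ps" and sz: "\<forall>e\<in>H. size e = 2" and D: "Dg H"
  shows "\<exists>i. (i = length ps - 1 \<or> i + 3 \<le> length ps) \<and> {#ps!i, ps!(length ps - 1)#} \<in> H"
proof -
  let ?L = "length ps"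
  note p = lpD(1)[OF l] and L = lpD(2)[OF l]
  have "{#ps!(?L - 2), ps!Suc (?L - 2)#} \<in> H" using gpath_nth[OF p, of "?L - 2"] L by simp
  moreover have "Suc (?L - 2) = ?L - 1" using L by simp
  ultimately have e: "{#ps!(?L - 1), ps!(?L - 2)#} \<in> H" by (simp add: add_mset_commute)
  have d: "distinct ps" using p unfolding gpath_def by blast
  have "ps!(?L - 1) \<noteq> ps!(?L - 2)" using nth_eq_iff_index_eq[OF d, of "?L - 1" "?L - 2"] L by simp
  then obtain e' where e'1: "e' \<in> H" and e'2: "e' \<noteq> {#ps!(?L - 1), ps!(?L - 2)#}" and e'3: "ps!(?L - 1) \<in># e'"
    using DgD[OF D e] by blast
  have "e' \<noteq> {#ps!(?L - 2), ps!(?L - 1)#}" using e'2 by (simp add: add_mset_commute)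
  then obtain i where "(i = ?L - 1 \<or> i + 3 \<le> ?L)" "e' = {#ps!i, ps!(?L - 1)#}"
    using end_last[OF l sz e'1 e'3] by blast
  then show ?thesis using e'1 by blast
qed


lemma lp_rotate:
  assumes l: "lp H ps" and g: "good_cyc ps" and c: "cycle_edges ps \<subseteq> H"
  shows "lp H (rotate t ps)"
proof -
  let ?q = "rotate t ps" and ?L = "length ps"
  have "successively (\<lambda>a b. {#a, b#} \<in> H) ?q" unfolding successively_conv_nth
  proof (intro allI impI)
    fix i assume i: "Suc i < length ?q"
    then have iL: "i < ?L" "Suc i < ?L" by auto
    have "cedge ?q i = {#?q!i, ?q!Suc i#}" unfolding cedge_def using iL by simp
    moreover have "cedge ?q i = cedge ps ((t + i) mod ?L)" by (rule cedge_rotate[OF iL(1)])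
    moreover have "0 < ?L" using iL by linarith
    then have "(t + i) mod ?L < ?L" by simp
    then have "cedge ps ((t + i) mod ?L) \<in> cycle_edges ps" unfolding cycle_edges_eq by blast
    ultimately show "{#?q!i, ?q!Suc i#} \<in> H" using c by auto
  qed
  then have "gpath H ?q" using lpD(1)[OF l] unfolding gpath_def by simp
  then show ?thesis using lpD[OF l] unfolding lp_def by simp
qed

lemma graph_main:
  assumes fin: "finite H" and sz: "\<forall>e\<in>H. size e = 2" and D: "Dg H"
    and ab: "{#a, b#} \<in> H" "a \<noteq> b"
  shows "even_in H \<or> bowtie_in H \<or> dumbbell_in H \<or> iso_in H"
proof -
  define goodp where "goodp qs \<longleftrightarrow> (\<exists>i j. (j = 0 \<or> (2 \<le> j \<and> j < length qs)) \<and> {#qs!0, qs!j#} \<in> H \<and>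
      (i = length qs - 1 \<or> i + 3 \<le> length qs) \<and> {#qs!i, qs!(length qs - 1)#} \<in> H \<and>
      \<not> (i = 0 \<and> j = length qs - 1))" for qs
  have X: "even_in H \<or> bowtie_in H \<or> dumbbell_in H" if lq: "lp H qs" and gq: "goodp qs" for qs
  proof -
    from gq obtain i j where ijc: "(j = 0 \<or> (2 \<le> j \<and> j < length qs)) \<and> {#qs!0, qs!j#} \<in> H \<and>
      (i = length qs - 1 \<or> i + 3 \<le> length qs) \<and> {#qs!i, qs!(length qs - 1)#} \<in> H \<and>
      \<not> (i = 0 \<and> j = length qs - 1)" unfolding goodp_def by (elim exE) (rule that)
    note c1 = conjunct1[OF ijc] and r1 = conjunct2[OF ijc]
    note c2 = conjunct1[OF r1] and r2 = conjunct2[OF r1]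
    note c3 = conjunct1[OF r2] and r3 = conjunct2[OF r2]
    note c4 = conjunct1[OF r3] and c5 = conjunct2[OF r3]
    show ?thesis by (rule case1[OF lpD(1)[OF lq] lpD(2)[OF lq] c2 c1 c4 c3 c5 sz])
  qed
  obtain ps where l: "lp H ps" using lp_exists[OF fin ab] by blast
  let ?L = "length ps"
  note L = lpD(2)[OF l]
  show ?thesis
  proof (cases "goodp ps")
    case True then show ?thesis using X l by blast
  next
    case ng: False
    obtain j0 where j0: "j0 = 0 \<or> (2 \<le> j0 \<and> j0 < ?L)" "{#ps!0, ps!j0#} \<in> H"
      using end_exists_hd[OF l sz D] by blast
    obtain i0 where i0: "i0 = ?L - 1 \<or> i0 + 3 \<le> ?L" "{#ps!i0, ps!(?L - 1)#} \<in> H"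
      using end_exists_last[OF l sz D] by blast
    have ij0: "i0 = 0 \<and> j0 = ?L - 1"
    proof (rule ccontr)
      assume c: "\<not> (i0 = 0 \<and> j0 = ?L - 1)"
      have "goodp ps" unfolding goodp_def
        by (rule exI[of _ i0], rule exI[of _ j0], intro conjI) (rule j0(1), rule j0(2), rule i0(1), rule i0(2), rule c)
      then show False using ng by contradiction
    qed
    have L3: "3 \<le> ?L" using ij0 j0 L by auto
    have nep: "ps \<noteq> []" using L by auto
    have clos: "{#last ps, hd ps#} \<in> H" using j0(2) ij0 nep
      by (simp add: last_conv_nth hd_conv_nth add_mset_commute)
    have gc: "good_cyc ps \<and> cycle_edges ps \<subseteq> H"
      by (rule gpath_cycle[OF lpD(1)[OF l] nep _ clos]) (use L3 in simp)
    show ?thesis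
    proof (cases "even ?L")
      case True then show ?thesis using gc unfolding even_in_def by blast
    next
      case oddL: False
      show ?thesis
      proof (cases "\<exists>t. goodp (rotate t ps)")
        case True
        then obtain t where "goodp (rotate t ps)" by blast
        then show ?thesis using X lp_rotate[OF l] gc by blast
      next
        case nr: False
        have "\<forall>e\<in>H. \<forall>x\<in>set ps. x \<in># e \<longrightarrow> e \<in> cycle_edges ps"
        proof (intro ballI impI)
          fix e x assume e: "e \<in> H" and x: "x \<in> set ps" and xe: "x \<in># e"
          obtain t where t: "t < ?L" "x = ps!t" using x by (auto simp: in_set_conv_nth)
          let ?q = "rotate t ps"
          have lq: "lp H ?q" using lp_rotate[OF l] gc by blast
          have lenq: "length ?q = ?L" by simp
          have q0: "?q!0 = x" using t nth_rotate[of 0 ps t] nep by simp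
          have ceq: "cycle_edges ?q = cycle_edges ps" by (rule cycle_edges_rotate)
          have ngq: "\<not> goodp ?q" using nr by blast
          show "e \<in> cycle_edges ps"
          proof (cases "e = {#?q!0, ?q!1#}")
            case True
            have "cedge ?q 0 = {#?q!0, ?q!1#}" unfolding cedge_def using L3 by simp
            then have "e = cedge ?q 0" using True by simp
            moreover have "0 \<in> {..<length ?q}" using nep by simp
            ultimately have "e \<in> cycle_edges ?q" unfolding cycle_edges_eq by blast
            then show ?thesis using ceq by simp
          next
            case False
            have q0e: "?q!0 \<in># e" using q0 xe by simp
            obtain j where j: "j = 0 \<or> (2 \<le> j \<and> j < length ?q)" "e = {#?q!0, ?q!j#}"
              using end_hd[OF lq sz e q0e False] by blast
            obtain i where i: "i = length ?q - 1 \<or> i + 3 \<le> length ?q" "{#?q!i, ?q!(length ?q - 1)#} \<in> H"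
              using end_exists_last[OF lq sz D] by blast
            have "i = 0 \<and> j = length ?q - 1"
            proof (rule ccontr)
              assume c: "\<not> (i = 0 \<and> j = length ?q - 1)"
              have je: "{#?q!0, ?q!j#} \<in> H" using j(2) e by simp
              have "goodp ?q" unfolding goodp_def
                by (rule exI[of _ i], rule exI[of _ j], intro conjI) (rule j(1), rule je, rule i(1), rule i(2), rule c)
              then show False using ngq by contradiction
            qed
            then have "i = 0 \<and> j = ?L - 1" using lenq by simp
            then have ej: "e = {#?q!0, ?q!(?L - 1)#}" using j by simp
            have "Suc (?L - 1) = ?L" using L3 by simp
            then have "(?L - 1 + 1) mod ?L = 0" by simp
            then have "cedge ?q (?L - 1) = {#?q!(?L - 1), ?q!0#}" unfolding cedge_def by simp
            then have "e = cedge ?q (?L - 1)" using ej by (simp add: add_mset_commute)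
            moreover have "?L - 1 < length ?q" using L3 by simp
            ultimately have "e \<in> cycle_edges ?q" unfolding cycle_edges_eq by blast
            then show ?thesis using ceq by simp
          qed
        qed
        then have "iso_in H" unfolding iso_in_def using gc oddL by blast
        then show ?thesis by blast
      qed
    qed
  qed
qed


section \<open>Forward direction\<close>

lemma min_eq:
  assumes m: "minimal_complex K C" and D: "D \<subseteq> C" "D \<noteq> {}" and mD: "minimal_complex K D"
  shows "D = C"
proof (rule ccontr)
  assume "D \<noteq> C"
  moreover have "balanceable K D" using mD unfolding minimal_complex_def by blast
  ultimately show False using m D unfolding minimal_complex_def by blast
qed

lemma good_odd_cycle: "good_cyc vs \<Longrightarrow> odd (length vs) \<Longrightarrow> is_odd_cycle (cycle_edges vs)"
  unfolding is_odd_cycle_def is_cycle_def using good_cyc_len good_cyc_distinct by blast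

lemma good_even_cycle: "good_cyc vs \<Longrightarrow> even (length vs) \<Longrightarrow> is_even_cycle (cycle_edges vs)"
  unfolding is_even_cycle_def is_cycle_def using good_cyc_len good_cyc_distinct by blast

lemma H_even:
  assumes m: "minimal_complex TYPE('k::field) C" and e: "even_in C"
  shows "is_even_cycle C"
proof -
  obtain vs where vs: "good_cyc vs" "even (length vs)" "cycle_edges vs \<subseteq> C" using e unfolding even_in_def by blast
  have "cycle_edges vs = C" by (rule min_eq[OF m vs(3) cycle_edges_ne[OF vs(1)] even_cycle_min[OF vs(1,2)]])
  then show ?thesis using good_even_cycle[OF vs(1,2)] by simp
qed

lemma H_bow:
  assumes m: "minimal_complex TYPE('k::field) C" and e: "bowtie_in C"
  shows "two_odd_cycles_one_vertex C"
proof -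
  obtain u v where uv: "good_cyc u" "good_cyc v" "odd (length u)" "odd (length v)"
     "cycle_edges u \<inter> cycle_edges v = {}" "hd u = hd v" "set u \<inter> set v = {hd u}"
     "cycle_edges u \<subseteq> C" "cycle_edges v \<subseteq> C" using e unfolding bowtie_in_def by blast
  have mm: "minimal_complex TYPE('k) (cycle_edges u \<union> cycle_edges v)"
    by (rule pair_min) (use uv in auto)
  have eq: "cycle_edges u \<union> cycle_edges v = C"
    by (rule min_eq[OF m _ _ mm]) (use uv(8,9) cycle_edges_ne[OF uv(1)] in auto)
  have vu: "verts (cycle_edges u) = set u" by (rule verts_cycle_edges[OF good_cyc_ne[OF uv(1)]])
  have vv: "verts (cycle_edges v) = set v" by (rule verts_cycle_edges[OF good_cyc_ne[OF uv(2)]])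
  have "card (verts (cycle_edges u) \<inter> verts (cycle_edges v)) = 1" using vu vv uv(7) by simp
  then show ?thesis unfolding two_odd_cycles_one_vertex_def
    using good_odd_cycle[OF uv(1,3)] good_odd_cycle[OF uv(2,4)] uv(5) eq by blast
qed

lemma H_pair:
  assumes m: "minimal_complex TYPE('k::field) C" and ch: "CHAR('k) = 2"
    and uv: "good_cyc u" "good_cyc v" "odd (length u)" "odd (length v)" "set u \<inter> set v = {}"
       "cycle_edges u \<subseteq> C" "cycle_edges v \<subseteq> C"
  shows "two_disjoint_odd_cycles C"
proof -
  have two: "(2::'k) = 0" using ch two_eq_0_iff by blast
  have mm: "minimal_complex TYPE('k) (cycle_edges u \<union> cycle_edges v)"
    by (rule pair_min) (use uv two cyc_disjoint_edges[OF uv(5)] in auto)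
  have eq: "cycle_edges u \<union> cycle_edges v = C"
    by (rule min_eq[OF m _ _ mm]) (use uv(6,7) cycle_edges_ne[OF uv(1)] in auto)
  have vu: "verts (cycle_edges u) = set u" by (rule verts_cycle_edges[OF good_cyc_ne[OF uv(1)]])
  have vv: "verts (cycle_edges v) = set v" by (rule verts_cycle_edges[OF good_cyc_ne[OF uv(2)]])
  have "verts (cycle_edges u) \<inter> verts (cycle_edges v) = {}" using vu vv uv(5) by simp
  then show ?thesis unfolding two_disjoint_odd_cycles_def
    using good_odd_cycle[OF uv(1,3)] good_odd_cycle[OF uv(2,4)] eq by blast
qed

lemma H_dumb:
  assumes m: "minimal_complex TYPE('k::field) C" and ch: "CHAR('k) \<noteq> 2" and e: "dumbbell_in C"
  shows "odd_cycles_with_path C"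
proof -
  obtain u v ps where uv: "good_cyc u" "good_cyc v" "odd (length u)" "odd (length v)"
     "distinct ps" "2 \<le> length ps" "hd ps = hd u" "last ps = hd v" "set u \<inter> set v = {}"
     "set ps \<inter> set u = {hd u}" "set ps \<inter> set v = {hd v}"
     "cycle_edges u \<subseteq> C" "cycle_edges v \<subseteq> C" "path_edges ps \<subseteq> C"
    using e unfolding dumbbell_in_def by blast
  have two: "(2::'k) \<noteq> 0" using ch two_eq_0_iff by blast
  have mm: "minimal_complex TYPE('k) (cycle_edges u \<union> cycle_edges v \<union> path_edges ps)"
    by (rule dumbbell_min[OF uv(1-11) two])
  have eq: "cycle_edges u \<union> cycle_edges v \<union> path_edges ps = C"
    by (rule min_eq[OF m _ _ mm]) (use uv(12,13,14) cycle_edges_ne[OF uv(1)] in auto)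
  have vu: "verts (cycle_edges u) = set u" by (rule verts_cycle_edges[OF good_cyc_ne[OF uv(1)]])
  have vv: "verts (cycle_edges v) = set v" by (rule verts_cycle_edges[OF good_cyc_ne[OF uv(2)]])
  have ne: "ps \<noteq> []" using uv(6) by auto
  have int: "ps ! i \<notin> set u \<union> set v" if i: "0 < i" "i + 1 < length ps" for i
  proof -
    have i2: "i < length ps" using i by simp
    have "ps!i \<noteq> ps!0" using nth_eq_iff_index_eq[OF uv(5) i2, of 0] i ne by simp
    moreover have "ps!i \<noteq> ps!(length ps - 1)" using nth_eq_iff_index_eq[OF uv(5) i2, of "length ps - 1"] i by simp
    moreover have "ps!i \<in> set ps" using i2 by simp
    ultimately show ?thesis using uv(7,8,10,11) ne by (auto simp: hd_conv_nth last_conv_nth)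
  qed
  have "hd ps \<in> set u" "last ps \<in> set v" using uv good_cyc_ne by auto
  then show ?thesis unfolding odd_cycles_with_path_def
    by (intro exI[of _ "cycle_edges u"] exI[of _ "cycle_edges v"] exI[of _ ps])
       (use good_odd_cycle uv eq vu vv int in auto)
qed


lemma vsum_restrict:
  fixes f :: "'a multiset \<Rightarrow> 'k::field"
  assumes fin: "finite C" and sub: "Ob \<subseteq> C" and iso: "\<forall>e\<in>C. x \<in># e \<longrightarrow> e \<in> Ob"
  shows "(\<Sum>e\<in>C. of_nat (count e x) * f e) = (\<Sum>e\<in>Ob. of_nat (count e x) * f e)"
proof (rule sum.mono_neutral_right[OF fin sub])
  show "\<forall>e\<in>C - Ob. of_nat (count e x) * f e = 0"
  proof
    fix e assume "e \<in> C - Ob"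
    then have "x \<notin># e" using iso by blast
    then show "of_nat (count e x) * f e = 0" by (simp add: not_in_iff)
  qed
qed

lemma loop_good: "good_cyc [b]" "odd (length [b])" "cycle_edges [b] = {{#b, b#}}" "set [b] = {b}"
  unfolding good_cyc_def cycle_edges_def by auto

lemma min_Dg:
  fixes w :: "'a multiset \<Rightarrow> 'k::field"
  assumes fin: "finite C" and bw: "balanced_weighting C w"
  shows "Dg C"
  unfolding Dg_def
proof (intro ballI allI impI)
  fix e a b assume e: "e \<in> C" and ab: "e = {#a, b#} \<and> a \<noteq> b"
  show "\<exists>e'\<in>C. e' \<noteq> e \<and> a \<in># e'"
  proof (rule ccontr)
    assume "\<not> (\<exists>e'\<in>C. e' \<noteq> e \<and> a \<in># e')"
    then have iso: "\<forall>e'\<in>C. a \<in># e' \<longrightarrow> e' \<in> {e}" by blast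
    have "(\<Sum>e'\<in>C. of_nat (count e' a) * w e') = (\<Sum>e'\<in>{e}. of_nat (count e' a) * w e')"
      by (rule vsum_restrict[OF fin _ iso]) (use e in simp)
    also have "\<dots> = w e" using ab by auto
    finally have "w e = 0" using bw unfolding balanced_weighting_def by simp
    then show False using bw e unfolding balanced_weighting_def by blast
  qed
qed


lemma even_in_mono: "even_in R \<Longrightarrow> R \<subseteq> C \<Longrightarrow> even_in C"
  unfolding even_in_def by (meson order_trans)

lemma bowtie_in_mono: "bowtie_in R \<Longrightarrow> R \<subseteq> C \<Longrightarrow> bowtie_in C"
  unfolding bowtie_in_def by (meson order_trans)

lemma loop_of: "size e = 2 \<Longrightarrow> a \<in># e \<Longrightarrow> (\<forall>x y. e = {#x, y#} \<longrightarrow> x = y) \<Longrightarrow> e = {#a, a#}"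
  using edge_other by metis

lemma dumbbell_in_D: "dumbbell_in R \<Longrightarrow> \<exists>u. good_cyc u \<and> odd (length u) \<and> cycle_edges u \<subseteq> R"
  unfolding dumbbell_in_def by (elim exE conjE) (intro exI conjI)

lemma iso_in_D: "iso_in R \<Longrightarrow> \<exists>u. good_cyc u \<and> odd (length u) \<and> cycle_edges u \<subseteq> R"
  unfolding iso_in_def by (elim exE conjE) (intro exI conjI)

abbreviation RHS :: "'k::field itself \<Rightarrow> 'a multiset set \<Rightarrow> bool" where
  "RHS K C \<equiv> is_even_cycle C \<or> two_odd_cycles_one_vertex C \<or>
           (CHAR('k) = 2 \<and> two_disjoint_odd_cycles C) \<or> (CHAR('k) \<noteq> 2 \<and> odd_cycles_with_path C)"

lemma iso_case:
  fixes w :: "'a multiset \<Rightarrow> 'k::field"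
  assumes m: "minimal_complex TYPE('k) C" and fin: "finite C" and sz: "\<forall>e\<in>C. size e = 2"
    and bw: "balanced_weighting C w" and D: "Dg C"
    and vs: "good_cyc vs" "odd (length vs)" "cycle_edges vs \<subseteq> C"
    and iso: "\<forall>e\<in>C. \<forall>x\<in>set vs. x \<in># e \<longrightarrow> e \<in> cycle_edges vs"
  shows "RHS TYPE('k) C"
proof -
  let ?O = "cycle_edges vs" and ?a = "w (cedge vs 0)"
  have wnz: "\<forall>e\<in>C. w e \<noteq> 0" and tot: "sum w C = 0" and vz: "\<And>x. (\<Sum>e\<in>C. of_nat (count e x) * w e) = 0"
    using bw unfolding balanced_weighting_def by auto
  have vO: "(\<Sum>e\<in>?O. of_nat (count e x) * w e) = 0" if "x \<in> set vs" for x
  proof -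
    have "\<forall>e\<in>C. x \<in># e \<longrightarrow> e \<in> ?O" using iso that by blast
    then show ?thesis using vsum_restrict[OF fin vs(3), of x w] vz[of x] by simp
  qed
  have wO: "w e = calt vs ?a e" if "e \<in> ?O" for e
    by (rule alt_forced_calt[OF vs(1) _ that]) (rule vO, simp)
  have ne: "vs \<noteq> []" by (rule good_cyc_ne[OF vs(1)])
  have c0: "cedge vs 0 \<in> ?O" unfolding cycle_edges_eq using ne by simp
  have anz: "?a \<noteq> 0" using wnz c0 vs(3) by blast
  have "(\<Sum>e\<in>?O. of_nat (count e (hd vs)) * w e) = (\<Sum>e\<in>?O. of_nat (count e (hd vs)) * calt vs ?a e)"
    by (rule sum.cong) (simp_all add: wO)
  also have "\<dots> = 2 * ?a" using calt_vsum[OF vs(1), of "hd vs" ?a] vs(2) by simp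
  finally have "2 * ?a = 0" using vO[of "hd vs"] ne by simp
  then have two: "(2::'k) = 0" using anz by simp
  then have ch: "CHAR('k) = 2" using two_eq_0_iff by blast
  define R where "R = C - ?O"
  show ?thesis
  proof (cases "R = {}")
    case True
    then have "C = ?O" using vs(3) unfolding R_def by blast
    then have "sum w C = sum (calt vs ?a) ?O" by (simp add: wO cong: sum.cong)
    also have "\<dots> = ?a" using calt_total[OF vs(1), of ?a] vs(2) by simp
    finally show ?thesis using tot anz by simp
  next
    case Rne: False
    have RC: "R \<subseteq> C" unfolding R_def by blast
    have finR: "finite R" using fin RC by (rule finite_subset[rotated])
    have szR: "\<forall>e\<in>R. size e = 2" using sz RC by blast
    have out: "x \<notin> set vs" if "e \<in> R" "x \<in># e" for e x
      using iso that unfolding R_def by blast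
    have DR: "Dg R" unfolding Dg_def
    proof (intro ballI allI impI)
      fix e a b assume e: "e \<in> R" and ab: "e = {#a, b#} \<and> a \<noteq> b"
      have "e \<in> C" using e RC by blast
      then obtain e' where e': "e' \<in> C" "e' \<noteq> {#a, b#}" "a \<in># e'" using DgD[OF D] ab by blast
      have "a \<notin> set vs" using out[OF e] ab by simp
      then have "e' \<notin> ?O" using e'(3) cyc_edge_sub by blast
      then have "e' \<in> R" using e'(1) unfolding R_def by blast
      then show "\<exists>e'\<in>R. e' \<noteq> e \<and> a \<in># e'" using e' ab by blast
    qed
    have pairR: "two_disjoint_odd_cycles C" if "good_cyc u" "odd (length u)" "cycle_edges u \<subseteq> R" for u
    proof (rule H_pair[OF m ch vs(1) that(1) vs(2) that(2) _ vs(3)])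
      show "cycle_edges u \<subseteq> C" using that(3) RC by blast
      show "set vs \<inter> set u = {}"
      proof (rule ccontr)
        assume "set vs \<inter> set u \<noteq> {}"
        then obtain x where x: "x \<in> set vs" "x \<in> set u" by blast
        then have "x \<in> verts (cycle_edges u)" using verts_cycle_edges[OF good_cyc_ne[OF that(1)]] by simp
        then obtain e where "e \<in> cycle_edges u" "x \<in># e" unfolding verts_def by blast
        then show False using out that(3) x(1) by blast
      qed
    qed
    show ?thesis
    proof (cases "\<exists>a b. {#a, b#} \<in> R \<and> a \<noteq> b")
      case True
      then obtain a b where ab: "{#a, b#} \<in> R" "a \<noteq> b" by blast
      have "even_in R \<or> bowtie_in R \<or> dumbbell_in R \<or> iso_in R" by (rule graph_main[OF finR szR DR ab])
      then show ?thesis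
      proof (elim disjE)
        assume "even_in R" then show ?thesis using H_even[OF m] even_in_mono RC by blast
      next
        assume "bowtie_in R" then show ?thesis using H_bow[OF m] bowtie_in_mono RC by blast
      next
        assume "dumbbell_in R"
        then obtain u where "good_cyc u" "odd (length u)" "cycle_edges u \<subseteq> R" using dumbbell_in_D by blast
        then have "two_disjoint_odd_cycles C" by (rule pairR)
        then show ?thesis using ch by blast
      next
        assume "iso_in R"
        then obtain u where "good_cyc u" "odd (length u)" "cycle_edges u \<subseteq> R" using iso_in_D by blast
        then have "two_disjoint_odd_cycles C" by (rule pairR)
        then show ?thesis using ch by blast
      qed
    next
      case False
      obtain e where e: "e \<in> R" using Rne by blast
      have s2: "size e = 2" using szR e by blast
      obtain b where "b \<in># e" using s2 by (cases e) auto
      then obtain y where bye: "e = {#b, y#}" using edge_other[OF s2] by blast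
      have "y = b"
      proof (rule ccontr)
        assume "y \<noteq> b"
        then have "{#b, y#} \<in> R \<and> b \<noteq> y" using e bye by simp
        then show False using False by blast
      qed
      then have bb: "{#b, b#} \<in> R" using e bye by simp
      have "cycle_edges [b] \<subseteq> R" by (simp only: loop_good(3)) (use bb in blast)
      then have "two_disjoint_odd_cycles C" by (rule pairR[OF loop_good(1,2)])
      then show ?thesis using ch by blast
    qed
  qed
qed


lemma forward:
  assumes oc: "one_complex C" and m: "minimal_complex TYPE('k::field) C"
  shows "RHS TYPE('k) C"
proof -
  have fin: "finite C" and sz: "\<forall>e\<in>C. size e = 2" using oc unfolding one_complex_def by auto
  have Cne: "C \<noteq> {}" using m unfolding minimal_complex_def by blast
  obtain w :: "'a multiset \<Rightarrow> 'k" where bw: "balanced_weighting C w"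
    using m unfolding minimal_complex_def balanceable_def by blast
  have wnz: "\<forall>e\<in>C. w e \<noteq> 0" and tot: "sum w C = 0" and vz: "\<And>x. (\<Sum>e\<in>C. of_nat (count e x) * w e) = 0"
    using bw unfolding balanced_weighting_def by auto
  have D: "Dg C" by (rule min_Dg[OF fin bw])
  show ?thesis
  proof (cases "\<exists>a b. {#a, b#} \<in> C \<and> a \<noteq> b")
    case True
    then obtain a b where ab: "{#a, b#} \<in> C" "a \<noteq> b" by blast
    have "even_in C \<or> bowtie_in C \<or> dumbbell_in C \<or> iso_in C" by (rule graph_main[OF fin sz D ab])
    then show ?thesis
    proof (elim disjE)
      assume "even_in C" then show ?thesis using H_even[OF m] by blast
    next
      assume "bowtie_in C" then show ?thesis using H_bow[OF m] by blast
    next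
      assume db: "dumbbell_in C"
      show ?thesis
      proof (cases "CHAR('k) = 2")
        case True
        obtain u v ps where uv: "good_cyc u" "good_cyc v" "odd (length u)" "odd (length v)"
           "distinct ps" "2 \<le> length ps" "hd ps = hd u" "last ps = hd v" "set u \<inter> set v = {}"
           "set ps \<inter> set u = {hd u}" "set ps \<inter> set v = {hd v}"
           "cycle_edges u \<subseteq> C" "cycle_edges v \<subseteq> C" "path_edges ps \<subseteq> C"
          using db unfolding dumbbell_in_def by (elim exE conjE)
        have "two_disjoint_odd_cycles C" by (rule H_pair[OF m True uv(1-4,9,12,13)])
        then show ?thesis using True by blast
      next
        case False
        have "odd_cycles_with_path C" by (rule H_dumb[OF m False db])
        then show ?thesis using False by blast
      qed
    next
      assume "iso_in C"
      then obtain vs where vs: "good_cyc vs" "odd (length vs)" "cycle_edges vs \<subseteq> C"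
          "\<forall>e\<in>C. \<forall>x\<in>set vs. x \<in># e \<longrightarrow> e \<in> cycle_edges vs"
        unfolding iso_in_def by (elim exE conjE)
      show ?thesis by (rule iso_case[OF m fin sz bw D vs])
    qed
  next
    case nl: False
    have loop: "e = {#x, x#}" if eC: "e \<in> C" and xe: "x \<in># e" for e x
    proof -
      have s2: "size e = 2" using sz eC by blast
      obtain y where y: "e = {#x, y#}" using edge_other[OF s2 xe] by blast
      have "y = x"
      proof (rule ccontr)
        assume "y \<noteq> x"
        then have "{#x, y#} \<in> C \<and> x \<noteq> y" using eC y by auto
        then show False using nl by blast
      qed
      then show ?thesis using y by simp
    qed
    obtain e where e: "e \<in> C" using Cne by blast
    have s2: "size e = 2" using sz e by blast
    obtain a where "a \<in># e" using s2 by (cases e) auto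
    then have ea: "e = {#a, a#}" using loop e by blast
    have iso: "\<forall>e'\<in>C. a \<in># e' \<longrightarrow> e' \<in> {e}" using loop ea by auto
    have "(\<Sum>e'\<in>C. of_nat (count e' a) * w e') = (\<Sum>e'\<in>{e}. of_nat (count e' a) * w e')"
      by (rule vsum_restrict[OF fin _ iso]) (use e in simp)
    also have "\<dots> = 2 * w e" using ea by simp
    finally have "2 * w e = 0" using vz by simp
    then have two: "(2::'k) = 0" using wnz e by simp
    then have ch: "CHAR('k) = 2" using two_eq_0_iff by blast
    show ?thesis
    proof (cases "C = {e}")
      case True
      then show ?thesis using tot wnz e by simp
    next
      case False
      then obtain e2 where e2: "e2 \<in> C" "e2 \<noteq> e" using e by blast
      have s2': "size e2 = 2" using sz e2(1) by blast
      obtain b where "b \<in># e2" using s2' by (cases e2) auto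
      then have eb: "e2 = {#b, b#}" using loop e2(1) by blast
      have ba: "b \<noteq> a" using e2(2) ea eb by blast
      have "two_disjoint_odd_cycles C"
      proof (rule H_pair[OF m ch loop_good(1)[of a] loop_good(1)[of b] loop_good(2)[of a] loop_good(2)[of b]])
        show "set [a] \<inter> set [b] = {}" using ba by simp
        show "cycle_edges [a] \<subseteq> C" unfolding loop_good(3) using e ea by simp
        show "cycle_edges [b] \<subseteq> C" unfolding loop_good(3) using e2 eb by simp
      qed
      then show ?thesis using ch by blast
    qed
  qed
qed

theorem mainTheorem13:
  fixes C :: "'a multiset set"
  assumes "one_complex C"
  shows "minimal_complex TYPE('k::field) C \<longleftrightarrow>
           is_even_cycle C \<or>
           two_odd_cycles_one_vertex C \<or>
           (CHAR('k) = 2 \<and> two_disjoint_odd_cycles C) \<or>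
           (CHAR('k) \<noteq> 2 \<and> odd_cycles_with_path C)"
proof
  assume "minimal_complex TYPE('k::field) C"
  then show "RHS TYPE('k) C" by (rule forward[OF assms])
next
  assume "RHS TYPE('k) C"
  then show "minimal_complex TYPE('k::field) C" by (rule rhs_min)
qed

end
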